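(* Let $\delta\in\{\ast,0,\gamma\}$ and $t\in\mathbb T_\delta$. (a) Let $\mathcal C\subseteq\mathcal R_n^{(q^t)}$ be a cyclic $\mathbb F_q$-linear $\mathbb F_{q^t}$-code of length $n$, and for $0\le i\le s-1$ let $\mathcal C_i=\mathcal C\cap\mathcal J_i$ and $\mathcal C_i^{(\delta)}=\mathcal C^{\perp_\delta}\cap\mathcal J_i$ (so $\mathcal C=\bigoplus_i\mathcal C_i$ and $\mathcal C^{\perp_\delta}=\bigoplus_i\mathcal C_i^{(\delta)}$). Then $\mathcal C$ is $\delta$-complementary-dual if and only if $\mathcal C_i\cap\mathcal C_i^{(\delta)}=\{0\}$ for all $0\le i\le s-1$. (b) For $i\in\mathfrak F\cup\mathfrak I$ let $N_i$ be the number of $\mathcal K_i$-subspaces $\mathcal C_i$ of $\mathcal J_i$ with $\mathcal C_i\cap\mathcal C_i^{(\delta)}=\{0\}$ (where $\mathcal C_i^{(\delta)}=\{a\in\mathcal J_i:[a,c]_\delta=0\ \forall c\in\mathcal C_i\}$). For $h\in\mathfrak M$ let $N_h$ be the number of pairs $(\mathcal C_h,\mathcal C_{\mu(h)})$ of a $\mathcal K_h$-subspace $\mathcal C_h\subseteq\mathcal J_h$ and a $\mathcal K_{\mu(h)}$-subspace $\mathcal C_{\mu(h)}\subseteq\mathcal J_{\mu(h)}$ with $\mathcal C_h\cap\mathcal C_h^{(\delta)}=\{0\}$ and $\mathcal C_{\mu(h)}\cap\mathcal C_{\mu(h)}^{(\delta)}=\{0\}$, where $\mathcal C_h^{(\delta)}=\{a\in\mathcal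 J_h:[a,c]_\delta=0\ \forall c\in\mathcal C_{\mu(h)}\}$ and $\mathcal C_{\mu(h)}^{(\delta)}=\{a\in\mathcal J_{\mu(h)}:[a,c]_\delta=0\ \forall c\in\mathcal C_h\}$. Then the number of distinct $\delta$-complementary-dual cyclic $\mathbb F_q$-linear $\mathbb F_{q^t}$-codes of length $n$ is $\prod_{i\in\mathfrak F\cup\mathfrak I}N_i\prod_{h\in\mathfrak M}N_h$.
   Context: Standing setup. Let $q$ be a power of a prime $p$, $n\ge1$ an integer with $\gcd(n,q)=1$, and $t\ge2$ an integer. Put $\mathcal R_n^{(q)}=\mathbb F_q[X]/\langle X^n-1\rangle\subseteq\mathcal R_n^{(q^t)}=\mathbb F_{q^t}[X]/\langle X^n-1\rangle$. For an integer $\ell$, $C^{(q)}_\ell=\{\ell q^j \bmod n: j\ge0\}$ is the $q$-cyclotomic coset modulo $n$ containing $\ell$. Let $\ell_0=0,\ell_1,\dots,\ell_{s-1}$ be a complete set of representatives of the $q$-cyclotomic cosets modulo $n$, $d_i=|C^{(q)}_{\ell_i}|$, $\eta$ a primitive $n$th root of unity over $\mathbb F_q$, and $f_i(X)=\prod_{k\in C^{(q)}_{\ell_i}}(X-\eta^k)\in\mathbb F_q[X]$. Let $\mathcal K_i$ be the ideal of $\mathcal R_n^{(q)}$ generated by $(X^n-1)/f_i(X)$ (a field isomorphic to $\mathbb F_{q^{d_i}}$) and $\mathcal J_i$ the ideal of $\mathcal R_n^{(q^t)}$ generated by $(X^n-1)/f_i(X)$; under multiplication $\mathcal J_i$ is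 a $t$-dimensional $\mathcal K_i$-vector space. Let $\mu$ be the permutation of $\{0,\dots,s-1\}$ with $C^{(q)}_{-\ell_i}=C^{(q)}_{\ell_{\mu(i)}}$ (an involution with $\mu(0)=0$). Let $\mathfrak I=\{0\}$ if $n$ is odd and $\mathfrak I=\{0,i^\#\}$ if $n$ is even, where $C^{(q)}_{\ell_{i^\#}}=\{n/2\}$; let $\mathfrak F$ be the set of fixed points of $\mu$ not in $\mathfrak I$, and $\mathfrak M$ a set containing exactly one element from each 2-cycle of $\mu$. For integers $u\ge0$ and $v$ with $\gcd(v,n)=1$ let $\tau_{q^u,v}(\sum_i a_iX^i)=\sum_i a_i^{q^u}X^{vi}$ on $\mathcal R_n^{(q^t)}$. Define forms $\mathcal R_n^{(q^t)}\times\mathcal R_n^{(q^t)}\to\mathcal R_n^{(q)}$: (ordinary, $\delta=0$) $[a,b]_0=\sum_{w=0}^{t-1}\tau_{q^w,1}(a\,\tau_{1,-1}(b))$; (Hermitian, $\delta=\gamma$, $t$ even) writing $t=2^em$ with $e\ge1$, $m$ odd, and fixing a nonzero $\gamma\in\mathbb F_{q^{2^e}}$ with $\gamma+\gamma^{q^{2^{e-1}}}=0$, $[a,b]_\gamma=\sum_{w=0}^{t-1}\tau_{q^w,1}(\gamma a\,\tau_{q^{t/2},-1}(b))$; ($\delta=\ast$, $t\not\equiv1\pmod p$) $[a,b]_\ast=\sum_{u=0}^{t-1}\tau_{q^u,1}\big(a\sum_{w=1}^{t-1}\tau_{q^w,-1}(b)\big)$. $\mathbb T_\ast$ is the set of integers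 $t\ge2$ with $t\not\equiv1\pmod p$, $\mathbb T_0$ the set of all integers $t\ge2$, $\mathbb T_\gamma$ the set of even integers $t\ge2$. Under the identification $(a_0,\dots,a_{n-1})\leftrightarrow\sum a_iX^i$ these correspond to the $\mathbb F_q$-valued forms on $\mathbb F_{q^t}^n$: $(a,b)_0=\sum_j\mathrm{Tr}(a_jb_j)$, $(a,b)_\gamma=\sum_j\mathrm{Tr}(\gamma a_jb_j^{q^{t/2}})$, $(a,b)_\ast=\sum_j\mathrm{Tr}(a_j\phi(b_j))$ with $\phi(\alpha)=\alpha^q+\alpha^{q^2}+\dots+\alpha^{q^{t-1}}$ and $\mathrm{Tr}$ the trace $\mathbb F_{q^t}\to\mathbb F_q$. An $\mathbb F_q$-linear $\mathbb F_{q^t}$-code of length $n$ is an $\mathbb F_q$-subspace $\mathcal C\subseteq\mathbb F_{q^t}^n$; it is cyclic if closed under the cyclic shift; cyclic codes are identified with $\mathcal R_n^{(q)}$-submodules of $\mathcal R_n^{(q^t)}$. Its $\delta$-dual is $\mathcal C^{\perp_\delta}=\{v:(v,c)_\delta=0\ \forall c\in\mathcal C\}$, and $\mathcal C$ is $\delta$-complementary-dual if $\mathcal C\cap\mathcal C^{\perp_\delta}=\{0\}$. *)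

theory Defs
  imports "HOL-Computational_Algebra.Computational_Algebra"
begin

text \<open>Everything lives inside one ambient field 'e of characteristic p.
  F_{q^t} is the subfield of roots of X^(q^t) - X, F_q that of X^q - X.
  Elements of R_n (vectors of length n) are functions nat => 'e vanishing at indices >= n;
  the vector (a_0,..,a_{n-1}) corresponds to sum a_i X^i.\<close>

datatype 'a form_kind = Star | Ord | Herm 'a

definition Fsub :: "nat \<Rightarrow> 'a::comm_ring_1 set" where
  "Fsub r = {x. x ^ r = x}"

definition zvec :: "nat \<Rightarrow> 'a::zero" where
  "zvec = (\<lambda>_. 0)"

definition vecs :: "'a::zero set \<Rightarrow> nat \<Rightarrow> (nat \<Rightarrow> 'a) set" where
  "vecs F n = {a. (\<forall>k<n. a k \<in> F) \<and> (\<forall>k\<ge>n. a k = 0)}"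

definition rmul :: "nat \<Rightarrow> (nat \<Rightarrow> 'a::comm_ring_1) \<Rightarrow> (nat \<Rightarrow> 'a) \<Rightarrow> nat \<Rightarrow> 'a" where
  "rmul n a b = (\<lambda>k. if k < n then (\<Sum>i<n. \<Sum>j<n. if (i + j) mod n = k then a i * b j else 0) else 0)"

text \<open>tau n r v (sum a_i X^i) = sum a_i^r X^(v i mod n); used with r = q^u.\<close>
definition tau :: "nat \<Rightarrow> nat \<Rightarrow> int \<Rightarrow> (nat \<Rightarrow> 'a::comm_ring_1) \<Rightarrow> nat \<Rightarrow> 'a" where
  "tau n r v a = (\<lambda>k. if k < n then (\<Sum>i<n. if (v * int i) mod int n = int k then a i ^ r else 0) else 0)"

definition trace :: "nat \<Rightarrow> nat \<Rightarrow> 'a::comm_ring_1 \<Rightarrow> 'a" where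
  "trace q t x = (\<Sum>w<t. x ^ (q ^ w))"

definition phi :: "nat \<Rightarrow> nat \<Rightarrow> 'a::comm_ring_1 \<Rightarrow> 'a" where
  "phi q t x = (\<Sum>w\<in>{1..<t}. x ^ (q ^ w))"

definition herm_ok :: "nat \<Rightarrow> nat \<Rightarrow> 'a::field \<Rightarrow> bool" where
  "herm_ok q t \<gamma> \<longleftrightarrow> (let e = multiplicity (2::nat) t in
      \<gamma> \<noteq> 0 \<and> \<gamma> ^ (q ^ (2 ^ e)) = \<gamma> \<and> \<gamma> + \<gamma> ^ (q ^ (2 ^ (e - 1))) = 0)"

definition in_T :: "nat \<Rightarrow> nat \<Rightarrow> nat \<Rightarrow> 'a::field form_kind \<Rightarrow> bool" where
  "in_T p q t \<delta> = (case \<delta> of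
       Star \<Rightarrow> 2 \<le> t \<and> t mod p \<noteq> 1 mod p
     | Ord \<Rightarrow> 2 \<le> t
     | Herm \<gamma> \<Rightarrow> 2 \<le> t \<and> even t \<and> herm_ok q t \<gamma>)"

definition vform :: "nat \<Rightarrow> nat \<Rightarrow> nat \<Rightarrow> 'a::field form_kind \<Rightarrow> (nat \<Rightarrow> 'a) \<Rightarrow> (nat \<Rightarrow> 'a) \<Rightarrow> 'a" where
  "vform q t n \<delta> a b = (\<Sum>j<n. case \<delta> of
       Ord \<Rightarrow> trace q t (a j * b j)
     | Herm \<gamma> \<Rightarrow> trace q t (\<gamma> * a j * b j ^ (q ^ (t div 2)))
     | Star \<Rightarrow> trace q t (a j * phi q t (b j)))"

definition bform :: "nat \<Rightarrow> nat \<Rightarrow> nat \<Rightarrow> 'a::field form_kind \<Rightarrow> (nat \<Rightarrow> 'a) \<Rightarrow> (nat \<Rightarrow> 'a) \<Rightarrow> nat \<Rightarrow> 'a" where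
  "bform q t n \<delta> a b = (case \<delta> of
       Ord \<Rightarrow> (\<lambda>k. \<Sum>w<t. tau n (q ^ w) 1 (rmul n a (tau n 1 (-1) b)) k)
     | Herm \<gamma> \<Rightarrow> (\<lambda>k. \<Sum>w<t. tau n (q ^ w) 1 (rmul n (\<lambda>i. \<gamma> * a i) (tau n (q ^ (t div 2)) (-1) b)) k)
     | Star \<Rightarrow> (\<lambda>k. \<Sum>u<t. tau n (q ^ u) 1
                    (rmul n a (\<lambda>i. \<Sum>w\<in>{1..<t}. tau n (q ^ w) (-1) b i)) k))"

definition cshift :: "nat \<Rightarrow> (nat \<Rightarrow> 'a::zero) \<Rightarrow> nat \<Rightarrow> 'a" where
  "cshift n a = (\<lambda>k. if k < n then a ((k + n - 1) mod n) else 0)"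

definition lin_code :: "nat \<Rightarrow> nat \<Rightarrow> nat \<Rightarrow> (nat \<Rightarrow> 'a::field) set \<Rightarrow> bool" where
  "lin_code q t n C \<longleftrightarrow> C \<subseteq> vecs (Fsub (q ^ t)) n \<and> zvec \<in> C
     \<and> (\<forall>a\<in>C. \<forall>b\<in>C. (\<lambda>k. a k + b k) \<in> C)
     \<and> (\<forall>c\<in>Fsub q. \<forall>a\<in>C. (\<lambda>k. c * a k) \<in> C)"

definition cyclic_code :: "nat \<Rightarrow> nat \<Rightarrow> nat \<Rightarrow> (nat \<Rightarrow> 'a::field) set \<Rightarrow> bool" where
  "cyclic_code q t n C \<longleftrightarrow> lin_code q t n C \<and> (\<forall>a\<in>C. cshift n a \<in> C)"

definition dual :: "nat \<Rightarrow> nat \<Rightarrow> nat \<Rightarrow> 'a::field form_kind \<Rightarrow> (nat \<Rightarrow> 'a) set \<Rightarrow> (nat \<Rightarrow> 'a) set" where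
  "dual q t n \<delta> C = {v \<in> vecs (Fsub (q ^ t)) n. \<forall>c\<in>C. vform q t n \<delta> v c = 0}"

definition lcd :: "nat \<Rightarrow> nat \<Rightarrow> nat \<Rightarrow> 'a::field form_kind \<Rightarrow> (nat \<Rightarrow> 'a) set \<Rightarrow> bool" where
  "lcd q t n \<delta> C \<longleftrightarrow> C \<inter> dual q t n \<delta> C = {zvec}"

definition cyc_coset :: "nat \<Rightarrow> nat \<Rightarrow> int \<Rightarrow> nat set" where
  "cyc_coset q n l = {nat ((l * int q ^ j) mod int n) | j. True}"

definition fpoly :: "'a::field \<Rightarrow> nat \<Rightarrow> nat \<Rightarrow> int \<Rightarrow> 'a poly" where
  "fpoly \<eta> q n l = (\<Prod>k\<in>cyc_coset q n l. [:- (\<eta> ^ k), 1:])"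

definition gpoly :: "'a::field \<Rightarrow> nat \<Rightarrow> nat \<Rightarrow> int \<Rightarrow> 'a poly" where
  "gpoly \<eta> q n l = (monom 1 n - 1) div fpoly \<eta> q n l"

definition ideal_gen :: "'a::field set \<Rightarrow> nat \<Rightarrow> 'a poly \<Rightarrow> (nat \<Rightarrow> 'a) set" where
  "ideal_gen F n g = {rmul n b (\<lambda>k. coeff g k) | b. b \<in> vecs F n}"

definition Jid :: "nat \<Rightarrow> nat \<Rightarrow> nat \<Rightarrow> 'a::field \<Rightarrow> int \<Rightarrow> (nat \<Rightarrow> 'a) set" where
  "Jid q t n \<eta> l = ideal_gen (Fsub (q ^ t)) n (gpoly \<eta> q n l)"

definition Kid :: "nat \<Rightarrow> nat \<Rightarrow> 'a::field \<Rightarrow> int \<Rightarrow> (nat \<Rightarrow> 'a) set" where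
  "Kid q n \<eta> l = ideal_gen (Fsub q) n (gpoly \<eta> q n l)"

definition mu :: "nat \<Rightarrow> nat \<Rightarrow> nat \<Rightarrow> (nat \<Rightarrow> nat) \<Rightarrow> nat \<Rightarrow> nat" where
  "mu q n s ell i = (THE j. j < s \<and> cyc_coset q n (- int (ell i)) = cyc_coset q n (int (ell j)))"

definition Iset :: "nat \<Rightarrow> nat \<Rightarrow> nat \<Rightarrow> (nat \<Rightarrow> nat) \<Rightarrow> nat set" where
  "Iset q n s ell = (if odd n then {0}
      else {0, THE j. j < s \<and> cyc_coset q n (int (ell j)) = {n div 2}})"

definition Fset :: "nat \<Rightarrow> nat \<Rightarrow> nat \<Rightarrow> (nat \<Rightarrow> nat) \<Rightarrow> nat set" where
  "Fset q n s ell = {i. i < s \<and> mu q n s ell i = i} - Iset q n s ell"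

definition ksub :: "nat \<Rightarrow> (nat \<Rightarrow> 'a::field) set \<Rightarrow> (nat \<Rightarrow> 'a) set \<Rightarrow> (nat \<Rightarrow> 'a) set \<Rightarrow> bool" where
  "ksub n K J D \<longleftrightarrow> D \<subseteq> J \<and> zvec \<in> D
     \<and> (\<forall>a\<in>D. \<forall>b\<in>D. (\<lambda>k. a k + b k) \<in> D)
     \<and> (\<forall>x\<in>K. \<forall>a\<in>D. rmul n x a \<in> D)"

definition ldual :: "nat \<Rightarrow> nat \<Rightarrow> nat \<Rightarrow> 'a::field form_kind \<Rightarrow> (nat \<Rightarrow> 'a) set \<Rightarrow> (nat \<Rightarrow> 'a) set \<Rightarrow> (nat \<Rightarrow> 'a) set" where
  "ldual q t n \<delta> J D = {a \<in> J. \<forall>c\<in>D. bform q t n \<delta> a c = zvec}"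

definition Nfix :: "nat \<Rightarrow> nat \<Rightarrow> nat \<Rightarrow> 'a::field form_kind \<Rightarrow> 'a \<Rightarrow> int \<Rightarrow> nat" where
  "Nfix q t n \<delta> \<eta> l = card {D. ksub n (Kid q n \<eta> l) (Jid q t n \<eta> l) D
       \<and> D \<inter> ldual q t n \<delta> (Jid q t n \<eta> l) D = {zvec}}"

definition Npair :: "nat \<Rightarrow> nat \<Rightarrow> nat \<Rightarrow> 'a::field form_kind \<Rightarrow> 'a \<Rightarrow> int \<Rightarrow> int \<Rightarrow> nat" where
  "Npair q t n \<delta> \<eta> l l' = card {(D, E). ksub n (Kid q n \<eta> l) (Jid q t n \<eta> l) D
       \<and> ksub n (Kid q n \<eta> l') (Jid q t n \<eta> l') E
       \<and> D \<inter> ldual q t n \<delta> (Jid q t n \<eta> l) E = {zvec}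
       \<and> E \<inter> ldual q t n \<delta> (Jid q t n \<eta> l') D = {zvec}}"

end

theory Submission
  imports Defs "HOL-Number_Theory.Number_Theory" "HOL-Library.FuncSet"
begin

locale base =
  fixes p q ke n :: nat and \<eta> :: "'e::field"
  assumes prime_p: "prime p" and k1: "ke \<ge> 1" and q_def: "q = p ^ ke" and charp: "of_nat p = (0::'e)"
    and n1: "n \<ge> 1" and cop: "coprime n q"
    and eta_n: "\<eta> ^ n = 1" and eta_prim: "\<forall>j. 0 < j \<and> j < n \<longrightarrow> \<eta> ^ j \<noteq> 1"
begin

lemma CHAR_e: "CHAR('e) = p"
proof -
  have "CHAR('e) dvd p" using charp by (simp add: of_nat_eq_0_iff_char_dvd)
  then have "CHAR('e) = 1 \<or> CHAR('e) = p" using prime_p prime_nat_iff by blast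
  moreover have "CHAR('e) \<noteq> 1" using of_nat_CHAR[where 'a='e] by auto
  ultimately show ?thesis by blast
qed

lemma q_pow: "q ^ w = p ^ (ke * w)" by (simp add: q_def power_mult)

lemma frob_sum: "(sum f A :: 'e) ^ (q ^ w) = sum (\<lambda>i. f i ^ (q ^ w)) A"
  using freshmans_dream_sum'[of "q ^ w" "ke * w" f A] CHAR_e prime_p q_pow by auto

lemma frob_add: "((x::'e) + y) ^ (q ^ w) = x ^ (q ^ w) + y ^ (q ^ w)"
  using freshmans_dream'[of "q ^ w" "ke * w" x y] CHAR_e prime_p q_pow by auto

lemma q_pos: "q > 0" using q_def prime_p prime_gt_0_nat by simp

lemma n_ne0: "(of_nat n :: 'e) \<noteq> 0"
proof
  assume "(of_nat n :: 'e) = 0"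
  then have "p dvd n" using CHAR_e of_nat_eq_0_iff_char_dvd by metis
  moreover have "p dvd q" using q_def k1 by (simp add: dvd_power)
  ultimately have "p dvd gcd n q" by simp
  then show False using cop prime_p by simp
qed

lemma eta_ne0: "\<eta> \<noteq> 0" using eta_n n1 by (cases "\<eta> = 0") (auto simp: power_0_left)

end

context base begin

definition supp :: "(nat \<Rightarrow> 'e) \<Rightarrow> bool" where "supp a \<longleftrightarrow> (\<forall>j\<ge>n. a j = 0)"
definition hat :: "(nat \<Rightarrow> 'e) \<Rightarrow> nat \<Rightarrow> 'e" where "hat a m = (\<Sum>j<n. a j * \<eta> ^ (j * m))"
definition idft :: "(nat \<Rightarrow> 'e) \<Rightarrow> nat \<Rightarrow> 'e" where
  "idft f j = (if j < n then inverse (of_nat n) * (\<Sum>m<n. f m * inverse \<eta> ^ (j * m)) else 0)"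

lemma eta_pow_mod: "\<eta> ^ m = \<eta> ^ (m mod n)"
proof -
  have "\<eta> ^ m = \<eta> ^ (n * (m div n)) * \<eta> ^ (m mod n)" by (simp flip: power_add)
  also have "\<eta> ^ (n * (m div n)) = 1" by (simp add: power_mult eta_n)
  finally show ?thesis by simp
qed

lemma ieta_n: "inverse \<eta> ^ n = 1" by (simp add: power_inverse eta_n)

lemma ieta_pow_mod: "inverse \<eta> ^ m = inverse \<eta> ^ (m mod n)"
  by (metis eta_pow_mod power_inverse)

lemma eta_pow_eq_aux: "a < n \<Longrightarrow> b < n \<Longrightarrow> \<eta> ^ a = \<eta> ^ b \<Longrightarrow> a \<le> b \<Longrightarrow> a = b"
proof (rule ccontr)
  assume ab: "a < n" "b < n" "\<eta> ^ a = \<eta> ^ b" "a \<le> b" "a \<noteq> b"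
  have "\<eta> ^ b = \<eta> ^ a * \<eta> ^ (b - a)" using ab(4) by (metis le_add_diff_inverse power_add)
  then have "\<eta> ^ (b - a) = 1" using ab eta_ne0 by simp
  moreover have "0 < b - a" "b - a < n" using ab by auto
  ultimately show False using eta_prim by blast
qed

lemma eta_pow_eq: "\<eta> ^ a = \<eta> ^ b \<longleftrightarrow> a mod n = b mod n"
proof
  assume "\<eta> ^ a = \<eta> ^ b"
  then have e: "\<eta> ^ (a mod n) = \<eta> ^ (b mod n)" by (metis eta_pow_mod)
  have "a mod n < n" "b mod n < n" using n1 by auto
  then show "a mod n = b mod n" using eta_pow_eq_aux[OF _ _ e] eta_pow_eq_aux[OF _ _ e[symmetric]]
    by (metis nle_le)
next
  assume "a mod n = b mod n" then show "\<eta> ^ a = \<eta> ^ b" by (metis eta_pow_mod)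
qed

lemma geom: "(\<Sum>j<n. (\<eta> ^ a * inverse \<eta> ^ b) ^ j) = (if a mod n = b mod n then of_nat n else 0)"
proof -
  let ?z = "\<eta> ^ a * inverse \<eta> ^ b"
  have zq: "?z = \<eta> ^ a / \<eta> ^ b" by (simp add: power_inverse divide_inverse)
  have nz: "\<eta> ^ b \<noteq> 0" using eta_ne0 by simp
  show ?thesis
  proof (cases "a mod n = b mod n")
    case True
    then have "\<eta> ^ a = \<eta> ^ b" using eta_pow_eq by blast
    then have "?z = 1" using zq nz by simp
    then show ?thesis using True by simp
  next
    case False
    have "\<eta> ^ a \<noteq> \<eta> ^ b" using False eta_pow_eq by blast
    then have z1: "?z \<noteq> 1" using zq nz by simp
    have e1: "(\<eta> ^ a) ^ n = (\<eta> ^ n) ^ a" by (metis power_mult mult.commute)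
    have e2: "(inverse \<eta> ^ b) ^ n = (inverse \<eta> ^ n) ^ b" by (metis power_mult mult.commute)
    have "?z ^ n = (\<eta> ^ a) ^ n * (inverse \<eta> ^ b) ^ n" by (rule power_mult_distrib)
    then have "?z ^ n = 1" by (simp only: e1 e2 eta_n ieta_n power_one mult_1)
    then show ?thesis using False geometric_sum[OF z1, of n] by simp
  qed
qed

lemma sum_delta_mod:
  assumes "j < n"
  shows "(\<Sum>i<n. a i * (if i mod n = j mod n then c else 0)) = a j * (c::'e)"
proof -
  have "(\<Sum>i<n. a i * (if i mod n = j mod n then c else 0)) = (\<Sum>i<n. if i = j then a i * c else 0)"
    by (rule sum.cong) (use assms in auto)
  also have "\<dots> = a j * c" using assms by simp
  finally show ?thesis .
qed

lemma inversion:
  assumes "supp a" "j < n"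
  shows "a j = inverse (of_nat n) * (\<Sum>m<n. hat a m * inverse \<eta> ^ (j * m))"
proof -
  have "(\<Sum>m<n. hat a m * inverse \<eta> ^ (j * m)) = (\<Sum>m<n. \<Sum>i<n. a i * (\<eta> ^ i * inverse \<eta> ^ j) ^ m)"
    unfolding hat_def sum_distrib_right
  proof (rule sum.cong[OF refl], rule sum.cong[OF refl])
    fix m i
    have "\<eta> ^ (i * m) = (\<eta> ^ i) ^ m" "inverse \<eta> ^ (j * m) = (inverse \<eta> ^ j) ^ m"
      by (simp_all add: power_mult)
    then show "a i * \<eta> ^ (i * m) * inverse \<eta> ^ (j * m) = a i * (\<eta> ^ i * inverse \<eta> ^ j) ^ m"
      by (simp add: power_mult_distrib mult.assoc)
  qed
  also have "\<dots> = (\<Sum>i<n. a i * (\<Sum>m<n. (\<eta> ^ i * inverse \<eta> ^ j) ^ m))"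
    by (subst sum.swap) (simp add: sum_distrib_left)
  also have "\<dots> = (\<Sum>i<n. a i * (if i mod n = j mod n then of_nat n else 0))"
    by (simp only: geom)
  also have "\<dots> = a j * of_nat n" using sum_delta_mod assms by blast
  finally show ?thesis using n_ne0 by simp
qed

lemma hat_inj:
  assumes "supp a" "supp b" "\<And>m. m < n \<Longrightarrow> hat a m = hat b m"
  shows "a = b"
proof
  fix j show "a j = b j"
  proof (cases "j < n")
    case True then show ?thesis using inversion[OF assms(1) True] inversion[OF assms(2) True] assms(3) by simp
  next
    case False then show ?thesis using assms unfolding supp_def by simp
  qed
qed

lemma supp_idft: "supp (idft f)" unfolding supp_def idft_def by simp

lemma hat_idft:
  assumes "m < n"
  shows "hat (idft f) m = f m"
proof -
  have step: "idft f j * \<eta> ^ (j * m) = inverse (of_nat n) * (\<Sum>i<n. f i * (\<eta> ^ m * inverse \<eta> ^ i) ^ j)"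
    if jn: "j < n" for j
  proof -
    have "(\<Sum>i<n. f i * inverse \<eta> ^ (j * i)) * \<eta> ^ (j * m) = (\<Sum>i<n. f i * (\<eta> ^ m * inverse \<eta> ^ i) ^ j)"
      unfolding sum_distrib_right
    proof (rule sum.cong[OF refl])
      fix i
      have "\<eta> ^ (j * m) = (\<eta> ^ m) ^ j" "inverse \<eta> ^ (j * i) = (inverse \<eta> ^ i) ^ j"
        by (metis power_mult mult.commute)+
      then show "f i * inverse \<eta> ^ (j * i) * \<eta> ^ (j * m) = f i * (\<eta> ^ m * inverse \<eta> ^ i) ^ j"
        by (simp add: power_mult_distrib mult_ac)
    qed
    then show ?thesis using jn unfolding idft_def by (simp add: mult.assoc)
  qed
  have "hat (idft f) m = (\<Sum>j<n. inverse (of_nat n) * (\<Sum>i<n. f i * (\<eta> ^ m * inverse \<eta> ^ i) ^ j))"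
    unfolding hat_def by (rule sum.cong) (auto simp: step)
  also have "\<dots> = inverse (of_nat n) * (\<Sum>j<n. \<Sum>i<n. f i * (\<eta> ^ m * inverse \<eta> ^ i) ^ j)"
    by (rule sum_distrib_left[symmetric])
  also have "\<dots> = inverse (of_nat n) * (\<Sum>i<n. f i * (\<Sum>j<n. (\<eta> ^ m * inverse \<eta> ^ i) ^ j))"
    by (subst sum.swap) (simp add: sum_distrib_left)
  also have "\<dots> = inverse (of_nat n) * (\<Sum>i<n. f i * (if i mod n = m mod n then of_nat n else 0))"
    by (simp only: geom) (simp add: eq_commute)
  also have "\<dots> = f m" using sum_delta_mod[OF assms, of f] n_ne0 by simp
  finally show ?thesis .
qed

end

context base begin

lemma supp_rmul: "supp (rmul n a b)" unfolding supp_def rmul_def by simp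

lemma eta_mod_mult: "\<eta> ^ ((u mod n) * m) = \<eta> ^ (u * m)"
  by (subst eta_pow_mod, subst (2) eta_pow_mod) (simp add: mod_mult_left_eq)

lemma hat_rmul: "hat (rmul n a b) m = hat a m * hat b m"
proof -
  have "hat (rmul n a b) m = (\<Sum>i<n. \<Sum>u<n. \<Sum>v<n. (if (u + v) mod n = i then a u * b v * \<eta> ^ (i * m) else 0))"
  proof -
    have ifm: "(if P then x else 0) * y = (if P then x * y else 0)" for P and x y :: 'e by simp
    show ?thesis unfolding hat_def rmul_def by (auto intro!: sum.cong simp: sum_distrib_right ifm)
  qed
  also have "\<dots> = (\<Sum>u<n. \<Sum>v<n. \<Sum>i<n. (if (u + v) mod n = i then a u * b v * \<eta> ^ (i * m) else 0))"
    by (subst sum.swap, rule sum.cong[OF refl], rule sum.swap)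
  also have "\<dots> = (\<Sum>u<n. \<Sum>v<n. a u * b v * \<eta> ^ (((u + v) mod n) * m))"
  proof -
    have "(u + v) mod n < n" for u v using n1 by simp
    then show ?thesis by (simp add: sum.delta')
  qed
  also have "\<dots> = (\<Sum>u<n. \<Sum>v<n. (a u * \<eta> ^ (u * m)) * (b v * \<eta> ^ (v * m)))"
  proof -
    have "\<eta> ^ (((u + v) mod n) * m) = \<eta> ^ (u * m) * \<eta> ^ (v * m)" for u v
      by (simp only: eta_mod_mult add_mult_distrib power_add)
    then show ?thesis by (simp add: mult_ac)
  qed
  also have "\<dots> = hat a m * hat b m" unfolding hat_def by (simp add: sum_product)
  finally show ?thesis .
qed

lemma supp_add: "supp a \<Longrightarrow> supp b \<Longrightarrow> supp (\<lambda>k. a k + b k)" unfolding supp_def by simp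
lemma hat_add: "hat (\<lambda>k. a k + b k) m = hat a m + hat b m" unfolding hat_def by (simp add: distrib_right sum.distrib)
lemma supp_scale: "supp a \<Longrightarrow> supp (\<lambda>k. c * a k)" unfolding supp_def by simp
lemma hat_scale: "hat (\<lambda>k. c * a k) m = c * hat a m" unfolding hat_def by (simp add: sum_distrib_left mult_ac)
lemma supp_sum: "(\<And>i. i \<in> A \<Longrightarrow> supp (f i)) \<Longrightarrow> supp (\<lambda>k. \<Sum>i\<in>A. f i k)" unfolding supp_def by simp
lemma hat_sum: "hat (\<lambda>k. \<Sum>i\<in>A. f i k) m = (\<Sum>i\<in>A. hat (f i) m)"
  unfolding hat_def sum_distrib_right by (rule sum.swap)
lemma supp_zvec: "supp zvec" unfolding supp_def zvec_def by simp
lemma hat_zvec: "hat zvec m = 0" unfolding hat_def zvec_def by simp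

lemma rmul_comm: "rmul n (a::nat\<Rightarrow>'e) b = rmul n b a"
  by (rule hat_inj) (auto simp: supp_rmul hat_rmul mult.commute)
lemma rmul_assoc: "rmul n (rmul n (a::nat\<Rightarrow>'e) b) c = rmul n a (rmul n b c)"
  by (rule hat_inj) (auto simp: supp_rmul hat_rmul mult.assoc)
lemma rmul_add: "rmul n (a::nat\<Rightarrow>'e) (\<lambda>k. b k + c k) = (\<lambda>k. rmul n a b k + rmul n a c k)"
  by (rule hat_inj) (auto simp: supp_rmul supp_add hat_rmul hat_add distrib_left)
lemma rmul_zvec: "rmul n (a::nat\<Rightarrow>'e) zvec = zvec"
  by (rule hat_inj) (auto simp: supp_rmul supp_zvec hat_rmul hat_zvec)
lemma rmul_scale: "rmul n (a::nat\<Rightarrow>'e) (\<lambda>k. c * b k) = (\<lambda>k. c * rmul n a b k)"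
  by (rule hat_inj) (auto simp: supp_rmul supp_scale hat_rmul hat_scale mult_ac)
lemma rmul_sum: "finite A \<Longrightarrow> rmul n (a::nat\<Rightarrow>'e) (\<lambda>k. \<Sum>i\<in>A. f i k) = (\<lambda>k. \<Sum>i\<in>A. rmul n a (f i) k)"
  by (rule hat_inj) (auto simp: supp_rmul supp_sum hat_rmul hat_sum sum_distrib_left)

definition one :: "nat \<Rightarrow> 'e" where "one = (\<lambda>k. if k = 0 then 1 else 0)"
lemma supp_one: "supp one" unfolding supp_def one_def using n1 by simp
lemma hat_one: "hat one m = 1"
proof -
  have "hat one m = (\<Sum>j<n. if j = 0 then 1 else 0)" unfolding hat_def one_def by (rule sum.cong) auto
  then show ?thesis using n1 by simp
qed
lemma rmul_one: "supp a \<Longrightarrow> rmul n one a = a"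
  by (rule hat_inj) (auto simp: supp_rmul hat_rmul hat_one)

lemma shift_idx1: "i < n \<Longrightarrow> (((i + n - 1) mod n) + 1) mod n = i"
proof -
  assume i: "i < n"
  have "(((i + n - 1) mod n) + 1) mod n = (i + n - 1 + 1) mod n" by (simp only: mod_add_left_eq)
  also have "\<dots> = i" using n1 i by simp
  finally show ?thesis .
qed

lemma shift_idx2: "j < n \<Longrightarrow> ((j + 1) mod n + n - 1) mod n = j"
proof -
  assume j: "j < n"
  have "((j + 1) mod n + n - 1) mod n = ((j + 1) mod n + (n - 1)) mod n" using n1 by simp
  also have "\<dots> = (j + 1 + (n - 1)) mod n" by (simp only: mod_add_left_eq)
  also have "\<dots> = j" using n1 j by simp
  finally show ?thesis .
qed

lemma hat_shift: assumes "supp a" shows "hat (cshift n a) m = \<eta> ^ m * hat a m"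
proof -
  have "hat (cshift n a) m = (\<Sum>i<n. a ((i + n - 1) mod n) * \<eta> ^ (i * m))"
    unfolding hat_def cshift_def by simp
  also have "\<dots> = (\<Sum>j<n. a j * \<eta> ^ (((j + 1) mod n) * m))"
    by (rule sum.reindex_bij_witness[of _ "\<lambda>j. (j + 1) mod n" "\<lambda>i. (i + n - 1) mod n"])
      (use n1 in \<open>auto simp: shift_idx1[simplified] shift_idx2[simplified]\<close>)
  also have "\<dots> = (\<Sum>j<n. \<eta> ^ m * (a j * \<eta> ^ (j * m)))"
  proof -
    have "\<eta> ^ (((j + 1) mod n) * m) = \<eta> ^ m * \<eta> ^ (j * m)" for j
      by (simp only: eta_mod_mult add_mult_distrib power_add) simp
    then show ?thesis by (simp add: mult_ac)
  qed
  also have "\<dots> = \<eta> ^ m * hat a m" unfolding hat_def by (simp add: sum_distrib_left)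
  finally show ?thesis .
qed

lemma supp_shift: "supp (cshift n a)" unfolding supp_def cshift_def by simp

end

context base begin

lemma Fsub_add: "x \<in> Fsub (q ^ w) \<Longrightarrow> y \<in> Fsub (q ^ w) \<Longrightarrow> (x + y :: 'e) \<in> Fsub (q ^ w)"
  unfolding Fsub_def by (simp add: frob_add)
lemma Fsub_mult: "x \<in> Fsub r \<Longrightarrow> y \<in> Fsub r \<Longrightarrow> (x * y :: 'e) \<in> Fsub r"
  unfolding Fsub_def by (simp add: power_mult_distrib)
lemma Fsub_0: "(0::'e) \<in> Fsub (q ^ w)" unfolding Fsub_def using q_pos by simp
lemma Fsub_1: "(1::'e) \<in> Fsub r" unfolding Fsub_def by simp
lemma Fsub_inverse: "x \<in> Fsub r \<Longrightarrow> inverse (x::'e) \<in> Fsub r"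
  unfolding Fsub_def by (simp add: power_inverse)
lemma Fsub_sum: "(\<And>i. i \<in> A \<Longrightarrow> f i \<in> Fsub (q ^ w)) \<Longrightarrow> (\<Sum>i\<in>A. f i :: 'e) \<in> Fsub (q ^ w)"
  unfolding Fsub_def by (simp add: frob_sum)
lemma Fsub_q1: "Fsub q = Fsub (q ^ 1)" by simp

lemma Fsub_q_pow: "(x::'e) \<in> Fsub q \<Longrightarrow> x ^ (q ^ w) = x"
proof (induction w)
  case (Suc w)
  have "x ^ (q ^ Suc w) = (x ^ q) ^ (q ^ w)" by (simp add: power_mult)
  then show ?case using Suc unfolding Fsub_def by simp
qed simp

lemma Fsub_q_sub: "(x::'e) \<in> Fsub q \<Longrightarrow> x \<in> Fsub (q ^ w)"
  using Fsub_q_pow unfolding Fsub_def by simp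

lemma Fsub_of_nat: "(of_nat m :: 'e) \<in> Fsub q"
proof (induction m)
  case 0 then show ?case using Fsub_0[of 1] by simp
next
  case (Suc m) then show ?case using Fsub_add[where x="of_nat m" and y=1 and w=1] Fsub_1 by (simp add: add.commute)
qed

lemma vecs_supp: "a \<in> vecs F n \<Longrightarrow> supp a" unfolding vecs_def supp_def by simp

lemma rmul_vecs:
  fixes a b :: "nat \<Rightarrow> 'e"
  assumes "a \<in> vecs (Fsub (q ^ w)) n" "b \<in> vecs (Fsub (q ^ w)) n"
  shows "rmul n a b \<in> vecs (Fsub (q ^ w)) n"
  using assms unfolding vecs_def rmul_def
  by (auto intro!: Fsub_sum Fsub_mult simp: Fsub_0)

lemma vecs_q_sub: "(a :: nat \<Rightarrow> 'e) \<in> vecs (Fsub q) n \<Longrightarrow> a \<in> vecs (Fsub (q ^ w)) n"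
  unfolding vecs_def by (auto intro: Fsub_q_sub)

lemma vecs_add: "(a :: nat \<Rightarrow> 'e) \<in> vecs (Fsub (q ^ w)) n \<Longrightarrow> b \<in> vecs (Fsub (q ^ w)) n \<Longrightarrow> (\<lambda>k. a k + b k) \<in> vecs (Fsub (q ^ w)) n"
  unfolding vecs_def by (auto intro: Fsub_add)

lemma vecs_zvec: "(zvec :: nat \<Rightarrow> 'e) \<in> vecs (Fsub (q ^ w)) n" unfolding vecs_def zvec_def using Fsub_0 by auto

lemma frob_if: "(if P then x else 0 :: 'e) ^ (q ^ w) = (if P then x ^ (q ^ w) else 0)"
  using q_pos by simp

lemma frob_rmul:
  fixes e c :: "nat \<Rightarrow> 'e"
  assumes "e \<in> vecs (Fsub q) n"
  shows "(rmul n e c j) ^ (q ^ w) = rmul n e (\<lambda>i. c i ^ (q ^ w)) j"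
proof (cases "j < n")
  case True
  have "(rmul n e c j) ^ (q ^ w) = (\<Sum>u<n. \<Sum>v<n. (if (u + v) mod n = j then e u * c v else 0) ^ (q ^ w))"
    using True unfolding rmul_def by (simp add: frob_sum)
  also have "\<dots> = (\<Sum>u<n. \<Sum>v<n. (if (u + v) mod n = j then e u * c v ^ (q ^ w) else 0))"
  proof (intro sum.cong refl)
    fix u v assume "u \<in> {..<n}"
    then have "e u ^ (q ^ w) = e u" using assms Fsub_q_pow unfolding vecs_def by simp
    then show "(if (u + v) mod n = j then e u * c v else 0) ^ (q ^ w) = (if (u + v) mod n = j then e u * c v ^ (q ^ w) else 0)"
      by (simp only: frob_if power_mult_distrib)
  qed
  also have "\<dots> = rmul n e (\<lambda>i. c i ^ (q ^ w)) j" using True unfolding rmul_def by simp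
  finally show ?thesis .
next
  case False then show ?thesis unfolding rmul_def using q_pos by simp
qed

lemma mulq_bij: "bij_betw (\<lambda>m. (m * q) mod n) {..<n} {..<n}"
proof -
  have inj: "inj_on (\<lambda>m. (m * q) mod n) {..<n}"
  proof (rule inj_onI)
    fix a b assume ab: "a \<in> {..<n}" "b \<in> {..<n}" "(a * q) mod n = (b * q) mod n"
    then have "[a * q = b * q] (mod n)" by (simp add: cong_def)
    then have "[a = b] (mod n)" using cong_mult_rcancel_nat cop by (metis coprime_commute)
    then show "a = b" using ab by (simp add: cong_def)
  qed
  have sub: "(\<lambda>m. (m * q) mod n) ` {..<n} \<subseteq> {..<n}" using n1 by auto
  have "(\<lambda>m. (m * q) mod n) ` {..<n} = {..<n}" using endo_inj_surj[OF _ sub inj] by simp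
  then show ?thesis using inj unfolding bij_betw_def by simp
qed

lemma idft_Fq:
  assumes f: "\<And>m. m < n \<Longrightarrow> f ((m * q) mod n) = f m ^ q"
  shows "idft f \<in> vecs (Fsub q) n"
  unfolding vecs_def
proof (intro CollectI conjI allI impI)
  fix j :: nat assume j: "j < n"
  let ?g = "\<lambda>m. f m * inverse \<eta> ^ (j * m)"
  have nq: "inverse (of_nat n :: 'e) ^ q = inverse (of_nat n)"
    using Fsub_inverse[OF Fsub_of_nat[of n]] unfolding Fsub_def by simp
  have "(\<Sum>m<n. ?g m) ^ q = (\<Sum>m<n. ?g m ^ q)" using frob_sum[of ?g "{..<n}" 1] by simp
  also have "\<dots> = (\<Sum>m<n. ?g ((m * q) mod n))"
  proof (rule sum.cong[OF refl])
    fix m assume m: "m \<in> {..<n}"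
    have "(inverse \<eta> ^ (j * m)) ^ q = inverse \<eta> ^ (j * ((m * q) mod n))"
      by (simp add: power_mult[symmetric] mult.assoc) (metis ieta_pow_mod mod_mult_right_eq)
    then show "?g m ^ q = ?g ((m * q) mod n)" using f m by (simp add: power_mult_distrib)
  qed
  also have "\<dots> = (\<Sum>m<n. ?g m)" by (rule sum.reindex_bij_betw[OF mulq_bij])
  finally have "(\<Sum>m<n. ?g m) ^ q = (\<Sum>m<n. ?g m)" .
  then show "idft f j \<in> Fsub q" unfolding idft_def Fsub_def using j by (simp add: power_mult_distrib nq)
qed (simp add: idft_def)

end

context base begin

abbreviation cs where "cs l \<equiv> cyc_coset q n l"

lemma coset_iff: "k \<in> cs l \<longleftrightarrow> k < n \<and> (\<exists>j. [int k = l * int q ^ j] (mod int n))"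
proof
  assume "k \<in> cs l"
  then obtain j where j: "k = nat ((l * int q ^ j) mod int n)" unfolding cyc_coset_def by auto
  have "int k = (l * int q ^ j) mod int n" using j n1 by simp
  then show "k < n \<and> (\<exists>j. [int k = l * int q ^ j] (mod int n))" using n1
    by (metis cong_def mod_mod_trivial of_nat_less_iff pos_mod_bound of_nat_0_less_iff less_le_trans zero_less_one)
next
  assume "k < n \<and> (\<exists>j. [int k = l * int q ^ j] (mod int n))"
  then obtain j where k: "k < n" "[int k = l * int q ^ j] (mod int n)" by auto
  then have "int k = (l * int q ^ j) mod int n" unfolding cong_def by simp
  then have "k = nat ((l * int q ^ j) mod int n)" by simp
  then show "k \<in> cs l" unfolding cyc_coset_def by auto
qed

lemma coset_lt: "k \<in> cs l \<Longrightarrow> k < n" using coset_iff by blast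

lemma coset_self: "nat (l mod int n) \<in> cs l"
  unfolding cyc_coset_def by (auto intro: exI[of _ 0])

lemma qT: "[int q ^ (totient n * j) = 1] (mod int n)"
proof -
  have "[q ^ totient n = 1] (mod n)" using euler_theorem cop by (simp add: coprime_commute)
  then have "[int q ^ totient n = 1] (mod int n)" by (metis cong_int_iff of_nat_1 of_nat_power)
  then have "[(int q ^ totient n) ^ j = 1 ^ j] (mod int n)" by (rule cong_pow)
  then show ?thesis by (simp add: power_mult)
qed

lemma coset_cong: "[l = l'] (mod int n) \<Longrightarrow> cs l = cs l'"
proof -
  assume c: "[l = l'] (mod int n)"
  have "[l * int q ^ j = l' * int q ^ j] (mod int n)" for j using c by (rule cong_scalar_right)
  then show ?thesis unfolding set_eq_iff coset_iff by (meson cong_trans cong_sym)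
qed

lemma coset_trans: "m \<in> cs l \<Longrightarrow> k \<in> cs (int m) \<Longrightarrow> k \<in> cs l"
proof -
  assume "m \<in> cs l" "k \<in> cs (int m)"
  then obtain i j where "[int m = l * int q ^ i] (mod int n)" "[int k = int m * int q ^ j] (mod int n)" "k < n"
    by (auto simp: coset_iff)
  then have "[int k = l * int q ^ i * int q ^ j] (mod int n)"
    using cong_scalar_right cong_trans by blast
  then have "[int k = l * int q ^ (i + j)] (mod int n)" by (simp add: power_add mult.assoc)
  then show "k \<in> cs l" using \<open>k < n\<close> by (auto simp: coset_iff)
qed

lemma coset_sym: "m \<in> cs l \<Longrightarrow> nat (l mod int n) \<in> cs (int m)"
proof -
  assume "m \<in> cs l"
  then obtain j where j: "[int m = l * int q ^ j] (mod int n)" by (auto simp: coset_iff)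
  have T: "totient n \<ge> 1" using n1 by (simp add: Suc_le_eq)
  have "[int m * int q ^ ((totient n - 1) * j) = l * int q ^ j * int q ^ ((totient n - 1) * j)] (mod int n)"
    using j by (rule cong_scalar_right)
  also have "l * int q ^ j * int q ^ ((totient n - 1) * j) = l * int q ^ (totient n * j)"
  proof -
    have "j + (totient n - 1) * j = totient n * j" using T by (simp add: algebra_simps)
    then show ?thesis by (metis mult.assoc power_add)
  qed
  also have "[l * int q ^ (totient n * j) = l * 1] (mod int n)" using qT by (rule cong_scalar_left)
  finally have "[int (nat (l mod int n)) = int m * int q ^ ((totient n - 1) * j)] (mod int n)"
    using n1 by (simp add: cong_def cong_sym_eq)
  moreover have "nat (l mod int n) < n" using n1 by (simp add: nat_less_iff)
  ultimately show ?thesis unfolding coset_iff by auto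
qed

lemma coset_eq: "m \<in> cs l \<Longrightarrow> cs (int m) = cs l"
proof
  assume m: "m \<in> cs l"
  show "cs (int m) \<subseteq> cs l" using coset_trans[OF m] by auto
  have "cs l = cs (int (nat (l mod int n)))" by (rule coset_cong) (use n1 in \<open>simp add: cong_def\<close>)
  then show "cs l \<subseteq> cs (int m)" using coset_trans[OF coset_sym[OF m]] by auto
qed

lemma coset_mulq: "k \<in> cs l \<Longrightarrow> (k * q) mod n \<in> cs l"
proof -
  assume "k \<in> cs l"
  then obtain j where j: "[int k = l * int q ^ j] (mod int n)" by (auto simp: coset_iff)
  have "[int ((k * q) mod n) = int k * int q] (mod int n)" by (simp add: cong_def zmod_int)
  also have "[int k * int q = l * int q ^ j * int q] (mod int n)" using j by (rule cong_scalar_right)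
  finally have "[int ((k * q) mod n) = l * int q ^ Suc j] (mod int n)" by (simp add: mult_ac)
  moreover have "(k * q) mod n < n" using n1 by simp
  ultimately show ?thesis unfolding coset_iff by blast
qed

lemma coset_neg: "k < n \<Longrightarrow> (k \<in> cs (- l) \<longleftrightarrow> (n - k) mod n \<in> cs l)"
proof -
  assume k: "k < n"
  have e0: "int ((n - k) mod n) = (int n - int k) mod int n" using k by (simp add: zmod_int of_nat_diff)
  have e1: "(int n - int k) mod int n = (- int k) mod int n" by (simp add: mod_diff_left_eq[symmetric])
  have "[int k = - l * int q ^ j] (mod int n) \<longleftrightarrow> [int ((n - k) mod n) = l * int q ^ j] (mod int n)" for j
  proof -
    have "[int k = - l * int q ^ j] (mod int n) \<longleftrightarrow> [- int k = l * int q ^ j] (mod int n)"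
      using cong_minus_minus_iff[of "int k" "- l * int q ^ j" "int n"] by simp
    also have "\<dots> \<longleftrightarrow> [(- int k) mod int n = l * int q ^ j] (mod int n)" by simp
    finally show ?thesis using e0 e1 by simp
  qed
  then show ?thesis unfolding coset_iff using k n1 by auto
qed

end

locale cyc = base p q ke n \<eta> for p q ke n :: nat and \<eta> :: "'e::field" +
  fixes s :: nat and ell :: "nat \<Rightarrow> nat"
  assumes ell0: "ell 0 = 0" and ell_lt: "\<forall>i<s. ell i < n"
    and ell_inj: "\<forall>i<s. \<forall>j<s. cyc_coset q n (int (ell i)) = cyc_coset q n (int (ell j)) \<longrightarrow> i = j"
    and cover: "\<forall>m<n. \<exists>i<s. m \<in> cyc_coset q n (int (ell i))"
begin

abbreviation "mu' \<equiv> mu q n s ell"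

lemma part_unique: "i < s \<Longrightarrow> j < s \<Longrightarrow> m \<in> cs (int (ell i)) \<Longrightarrow> m \<in> cs (int (ell j)) \<Longrightarrow> i = j"
  using coset_eq ell_inj by metis

lemma part_ex: "m < n \<Longrightarrow> \<exists>i<s. m \<in> cs (int (ell i))" using cover by blast

lemma s_pos: "0 < s" using part_ex[of 0] n1 by auto

lemma mu_unique: "i < s \<Longrightarrow> j < s \<Longrightarrow> cs (- int (ell i)) = cs (int (ell j)) \<Longrightarrow> mu' i = j"
  unfolding mu_def
  by (rule the_equality) (auto, metis ell_inj)

lemma mu_spec: "i < s \<Longrightarrow> mu' i < s \<and> cs (- int (ell i)) = cs (int (ell (mu' i)))"
proof -
  assume i: "i < s"
  let ?m = "nat ((- int (ell i)) mod int n)"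
  have m: "?m \<in> cs (- int (ell i))" by (rule coset_self)
  then have "?m < n" by (rule coset_lt)
  then obtain j where j: "j < s" "?m \<in> cs (int (ell j))" using part_ex by blast
  have "cs (int (ell j)) = cs (int ?m)" using coset_eq[OF j(2)] by simp
  also have "\<dots> = cs (- int (ell i))" using coset_eq[OF m] .
  finally have e: "cs (- int (ell i)) = cs (int (ell j))" by simp
  then have "mu' i = j" using mu_unique i j by blast
  then show ?thesis using e j by simp
qed

lemma mod_neg_neg: "m < n \<Longrightarrow> (n - (n - m) mod n) mod n = m"
  by (cases "m = 0") (auto simp: mod_if)

lemma mu_neg: "i < s \<Longrightarrow> m < n \<Longrightarrow> (m \<in> cs (int (ell i)) \<longleftrightarrow> (n - m) mod n \<in> cs (int (ell (mu' i))))"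
proof -
  assume i: "i < s" and m: "m < n"
  have "(n - m) mod n < n" using n1 by simp
  then have "(n - m) mod n \<in> cs (- int (ell i)) \<longleftrightarrow> (n - (n - m) mod n) mod n \<in> cs (int (ell i))"
    by (rule coset_neg)
  then show ?thesis using mu_spec[OF i] mod_neg_neg[OF m] by simp
qed

lemma mu_mu: "i < s \<Longrightarrow> mu' (mu' i) = i"
proof -
  assume i: "i < s"
  have mi: "mu' i < s" using mu_spec i by blast
  have "cs (- int (ell (mu' i))) = cs (int (ell i))"
    unfolding set_eq_iff
  proof (intro allI)
    fix m
    show "m \<in> cs (- int (ell (mu' i))) \<longleftrightarrow> m \<in> cs (int (ell i))"
    proof (cases "m < n")
      case True
      have "m \<in> cs (- int (ell (mu' i))) \<longleftrightarrow> (n - m) mod n \<in> cs (int (ell (mu' i)))" using coset_neg True by blast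
      also have "\<dots> \<longleftrightarrow> m \<in> cs (int (ell i))" using mu_neg[OF i True] by simp
      finally show ?thesis .
    next
      case False then show ?thesis using coset_lt by blast
    qed
  qed
  then show ?thesis using mu_unique[OF mi i] by blast
qed

lemma mu_lt: "i < s \<Longrightarrow> mu' i < s" using mu_spec by blast

lemma Iset_fix: "Iset q n s ell \<subseteq> {i. i < s \<and> mu' i = i}"
proof -
  have "mu' 0 = 0" using mu_unique[OF s_pos s_pos] ell0 by simp
  then have z: "0 \<in> {i. i < s \<and> mu' i = i}" using s_pos by simp
  show ?thesis
  proof (cases "odd n")
    case True then show ?thesis using z unfolding Iset_def by simp
  next
    case False
    let ?h = "n div 2"
    have n2: "n = 2 * ?h" using False by simp
    have qodd: "odd q"
    proof
      assume "even q"
      then have "is_unit (2::nat)" using False cop coprime_common_divisor by blast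
      then show False by simp
    qed
    have hq: "[int ?h * int q ^ j = int ?h] (mod int n)" for j
    proof -
      have "odd (q ^ j)" using qodd by simp
      then obtain c where c: "q ^ j = 2 * c + 1" using oddE by blast
      have "int ?h * int q ^ j - int ?h = int n * int c"
        using c n2 by (simp add: algebra_simps flip: of_nat_power)
      then show ?thesis by (simp add: cong_iff_dvd_diff)
    qed
    have hn: "?h < n" using n1 by simp
    have csh: "cs (int ?h) = {?h}"
      unfolding set_eq_iff
    proof (intro allI)
      fix m show "m \<in> cs (int ?h) \<longleftrightarrow> m \<in> {?h}"
      proof
        assume "m \<in> cs (int ?h)"
        then obtain j where "m < n" "[int m = int ?h * int q ^ j] (mod int n)" by (auto simp: coset_iff)
        then have "m < n" "[int m = int ?h] (mod int n)" using hq cong_trans by blast+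
        then show "m \<in> {?h}" using hn by (simp add: cong_def)
      next
        assume "m \<in> {?h}"
        then show "m \<in> cs (int ?h)" using hn unfolding coset_iff by (auto intro!: exI[of _ 0])
      qed
    qed
    obtain j where j: "j < s" "?h \<in> cs (int (ell j))" using part_ex[OF hn] by blast
    have csj: "cs (int (ell j)) = {?h}" using coset_eq[OF j(2)] csh by simp
    have the: "(THE j. j < s \<and> cs (int (ell j)) = {?h}) = j"
      by (rule the_equality) (use j csj ell_inj in auto)
    have "ell j \<in> cs (int (ell j))" using coset_self[of "int (ell j)"] ell_lt j(1) by simp
    then have ej: "ell j = ?h" using csj by simp
    have "int n = 2 * int ?h" using n2 by linarith
    then have "[- int ?h = int ?h] (mod int n)" by (simp add: cong_iff_dvd_diff)
    then have "cs (- int (ell j)) = cs (int (ell j))" using ej by (simp add: coset_cong)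
    then have "mu' j = j" using mu_unique j(1) by blast
    then show ?thesis using z j(1) False the unfolding Iset_def by auto
  qed
qed

end

context base begin

definition Lin :: "nat \<Rightarrow> 'e poly" where "Lin m = [:- (\<eta> ^ m), 1:]"
definition PL :: "nat set \<Rightarrow> 'e poly" where "PL S = (\<Prod>m\<in>S. Lin m)"

lemma Lin_nz: "Lin m \<noteq> 0" unfolding Lin_def by simp
lemma poly_Lin: "poly (Lin m) x = x - \<eta> ^ m" unfolding Lin_def by simp
lemma poly_PL: "poly (PL S) x = (\<Prod>m\<in>S. x - \<eta> ^ m)" unfolding PL_def by (simp add: poly_prod poly_Lin)
lemma degree_PL: "finite S \<Longrightarrow> degree (PL S) = card S"
  unfolding PL_def by (subst degree_prod_sum_eq) (auto simp: Lin_nz Lin_def)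
lemma lead_PL: "lead_coeff (PL S) = 1" unfolding PL_def by (simp add: lead_coeff_prod Lin_def)
lemma PL_nz: "PL S \<noteq> 0" using lead_PL by (metis leading_coeff_0_iff zero_neq_one)

abbreviation Xn1 :: "'e poly" where "Xn1 \<equiv> Polynomial.monom 1 n - 1"

lemma eta_inj: "a < n \<Longrightarrow> b < n \<Longrightarrow> \<eta> ^ a = \<eta> ^ b \<Longrightarrow> a = b"
  using eta_pow_eq by simp

lemma poly_Xn1: "poly Xn1 (\<eta> ^ m) = 0"
proof -
  have "(\<eta> ^ m) ^ n = (\<eta> ^ n) ^ m" by (metis power_mult mult.commute)
  then show ?thesis by (simp add: poly_monom eta_n)
qed

lemma PL_dvd: "finite S \<Longrightarrow> S \<subseteq> {..<n} \<Longrightarrow> PL S dvd Xn1"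
proof (induction S rule: finite_induct)
  case empty then show ?case by (simp add: PL_def)
next
  case (insert x S)
  then obtain r where r: "Xn1 = PL S * r" by auto
  have "poly (PL S) (\<eta> ^ x) \<noteq> 0"
    unfolding poly_PL using insert eta_inj by (auto simp: prod_zero_iff)
  moreover have "poly (PL S) (\<eta> ^ x) * poly r (\<eta> ^ x) = 0" using r poly_Xn1[of x] by (metis poly_mult)
  ultimately have "poly r (\<eta> ^ x) = 0" by simp
  then have "Lin x dvd r" unfolding Lin_def by (simp add: poly_eq_0_iff_dvd)
  then have "Lin x * PL S dvd PL S * r" by (simp add: mult.commute mult_dvd_mono)
  then show ?case using r insert by (simp add: PL_def)
qed

lemma degree_Xn1: "degree Xn1 = n"
proof -
  have "degree (Polynomial.monom (1::'e) n + (- 1)) = n" using n1 by (subst degree_add_eq_left) (auto simp: degree_monom_eq)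
  then show ?thesis by simp
qed

lemma lead_Xn1: "lead_coeff Xn1 = 1" using degree_Xn1 n1 by simp

lemma Xn1_prod: "Xn1 = PL {..<n}"
proof -
  obtain r where r: "Xn1 = PL {..<n} * r" using PL_dvd[of "{..<n}"] by auto
  have "Xn1 \<noteq> 0"
  proof
    assume "Xn1 = 0" then have "lead_coeff Xn1 = 0" by (simp only: coeff_0)
    then show False using lead_Xn1 by simp
  qed
  then have rnz: "r \<noteq> 0" using r by auto
  have "degree Xn1 = degree (PL {..<n}) + degree r" using r rnz PL_nz by (simp add: degree_mult_eq)
  then have "degree r = 0" using degree_Xn1 degree_PL[of "{..<n}"] by simp
  moreover have "lead_coeff r = 1" using r lead_Xn1 lead_PL[of "{..<n}"] by (metis lead_coeff_mult mult_1)
  ultimately have "r = 1" using degree_0_id[of r] by (metis one_pCons)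
  then show ?thesis using r by simp
qed

lemma cs_sub: "cs l \<subseteq> {..<n}" using coset_lt by auto
lemma cs_fin: "finite (cs l)" using cs_sub finite_subset by blast

lemma fpoly_PL: "fpoly \<eta> q n l = PL (cs l)" unfolding fpoly_def PL_def Lin_def by simp

lemma gpoly_PL: "gpoly \<eta> q n l = PL ({..<n} - cs l)"
proof -
  have "PL {..<n} = PL (cs l) * PL ({..<n} - cs l)"
    unfolding PL_def using prod.subset_diff[OF cs_sub[of l] finite_lessThan] by (simp add: mult.commute)
  then show ?thesis unfolding gpoly_def fpoly_PL Xn1_prod using PL_nz by simp
qed

lemma cs_nonempty: "cs l \<noteq> {}" using coset_self by blast

lemma degree_gpoly: "degree (gpoly \<eta> q n l) < n"
proof -
  have "card ({..<n} - cs l) < n"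
  proof -
    have "card ({..<n} - cs l) = n - card (cs l)" using cs_sub cs_fin by (simp add: card_Diff_subset)
    moreover have "card (cs l) > 0" using cs_fin cs_nonempty by (simp add: card_gt_0_iff)
    ultimately show ?thesis using n1 by simp
  qed
  then show ?thesis unfolding gpoly_PL by (simp add: degree_PL)
qed

definition gv :: "int \<Rightarrow> nat \<Rightarrow> 'e" where "gv l = (\<lambda>j. Polynomial.coeff (gpoly \<eta> q n l) j)"

lemma supp_gv: "supp (gv l)"
  unfolding supp_def gv_def
proof (intro allI impI)
  fix j assume "n \<le> j"
  then have "degree (gpoly \<eta> q n l) < j" using degree_gpoly[of l] by simp
  then show "Polynomial.coeff (gpoly \<eta> q n l) j = 0" by (rule coeff_eq_0)
qed

lemma hat_gv: "hat (gv l) m = poly (gpoly \<eta> q n l) (\<eta> ^ m)"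
proof -
  let ?g = "gpoly \<eta> q n l"
  have "poly ?g (\<eta> ^ m) = (\<Sum>i\<le>degree ?g. Polynomial.coeff ?g i * (\<eta> ^ m) ^ i)" by (rule poly_altdef)
  also have "\<dots> = (\<Sum>i<n. Polynomial.coeff ?g i * (\<eta> ^ m) ^ i)"
    using degree_gpoly[of l] by (intro sum.mono_neutral_left) (auto simp: coeff_eq_0)
  also have "\<dots> = (\<Sum>j<n. Polynomial.coeff ?g j * \<eta> ^ (j * m))"
    by (intro sum.cong refl) (metis power_mult mult.commute)
  finally show ?thesis unfolding hat_def gv_def by simp
qed

lemma hat_gv_prod: "hat (gv l) m = (\<Prod>m'\<in>{..<n} - cs l. \<eta> ^ m - \<eta> ^ m')"
  unfolding hat_gv gpoly_PL poly_PL ..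

lemma hat_gv_zero: "m < n \<Longrightarrow> hat (gv l) m = 0 \<longleftrightarrow> m \<notin> cs l"
  unfolding hat_gv_prod using eta_inj by (auto simp: prod_zero_iff cs_fin)

end

context base begin

lemma frob_diff: "((x::'e) - y) ^ (q ^ w) = x ^ (q ^ w) - y ^ (q ^ w)"
  using frob_add[of "x - y" y w] by (simp add: algebra_simps)

lemma mulq_back: "m < n \<Longrightarrow> (m * q) mod n \<in> cs l \<Longrightarrow> m \<in> cs l"
proof -
  assume m: "m < n" and mq: "(m * q) mod n \<in> cs l"
  have mm: "m \<in> cs (int m)" using coset_self[of "int m"] m by (simp add: nat_mod_as_int[symmetric])
  have "(m * q) mod n \<in> cs (int m)" using coset_mulq[OF mm] .
  then have "cs (int ((m * q) mod n)) = cs (int m)" by (rule coset_eq)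
  moreover have "cs (int ((m * q) mod n)) = cs l" using mq by (rule coset_eq)
  ultimately show ?thesis using mm by simp
qed

lemma mulq_iff: "m < n \<Longrightarrow> (m * q) mod n \<in> cs l \<longleftrightarrow> m \<in> cs l"
  using mulq_back[of m l] coset_mulq[of m l] by blast

lemma mulq_bij_A: "bij_betw (\<lambda>m. (m * q) mod n) ({..<n} - cs l) ({..<n} - cs l)"
proof -
  let ?A = "{..<n} - cs l"
  have inj: "inj_on (\<lambda>m. (m * q) mod n) ?A"
    using bij_betw_imp_inj_on[OF mulq_bij] by (rule inj_on_subset) auto
  have sub: "(\<lambda>m. (m * q) mod n) ` ?A \<subseteq> ?A"
  proof
    fix x assume "x \<in> (\<lambda>m. (m * q) mod n) ` ?A"
    then obtain m where m: "m \<in> ?A" "x = (m * q) mod n" by blast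
    then have "x < n" using n1 by simp
    moreover have "x \<notin> cs l" using m mulq_back[of m l] by auto
    ultimately show "x \<in> ?A" by simp
  qed
  have "(\<lambda>m. (m * q) mod n) ` ?A = ?A" using endo_inj_surj[OF _ sub inj] by simp
  then show ?thesis using inj unfolding bij_betw_def by simp
qed

lemma hat_gv_frob: "m < n \<Longrightarrow> hat (gv l) ((m * q) mod n) = hat (gv l) m ^ q"
proof -
  assume m: "m < n"
  let ?A = "{..<n} - cs l"
  have "hat (gv l) m ^ q = (\<Prod>m'\<in>?A. (\<eta> ^ m - \<eta> ^ m') ^ q)"
    unfolding hat_gv_prod by (rule prod_power_distrib)
  also have "\<dots> = (\<Prod>m'\<in>?A. \<eta> ^ ((m * q) mod n) - \<eta> ^ ((m' * q) mod n))"
  proof (rule prod.cong[OF refl])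
    fix m' 
    have "(\<eta> ^ m - \<eta> ^ m') ^ q = (\<eta> ^ m) ^ q - (\<eta> ^ m') ^ q" using frob_diff[of _ _ 1] by simp
    also have "\<dots> = \<eta> ^ ((m * q) mod n) - \<eta> ^ ((m' * q) mod n)"
      by (simp add: power_mult[symmetric] eta_pow_mod[symmetric])
    finally show "(\<eta> ^ m - \<eta> ^ m') ^ q = \<eta> ^ ((m * q) mod n) - \<eta> ^ ((m' * q) mod n)" .
  qed
  also have "\<dots> = (\<Prod>m'\<in>?A. \<eta> ^ ((m * q) mod n) - \<eta> ^ m')"
    by (rule prod.reindex_bij_betw[OF mulq_bij_A])
  also have "\<dots> = hat (gv l) ((m * q) mod n)" unfolding hat_gv_prod ..
  finally show ?thesis by simp
qed

definition ee :: "int \<Rightarrow> nat \<Rightarrow> 'e" where "ee l = idft (\<lambda>m. if m \<in> cs l then 1 else 0)"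
definition uu :: "int \<Rightarrow> nat \<Rightarrow> 'e" where "uu l = idft (\<lambda>m. if m \<in> cs l then inverse (hat (gv l) m) else 0)"

lemma ee_Fq: "ee l \<in> vecs (Fsub q) n"
  unfolding ee_def by (rule idft_Fq) (use q_pos in \<open>auto simp: mulq_iff\<close>)

lemma uu_Fq: "uu l \<in> vecs (Fsub q) n"
  unfolding uu_def by (rule idft_Fq) (use q_pos in \<open>auto simp: mulq_iff hat_gv_frob power_inverse\<close>)

lemma gv_Fq: "gv l \<in> vecs (Fsub q) n"
proof -
  have "gv l = idft (hat (gv l))" by (rule hat_inj) (auto simp: supp_gv supp_idft hat_idft)
  also have "\<dots> \<in> vecs (Fsub q) n" by (rule idft_Fq) (simp add: hat_gv_frob)
  finally show ?thesis .
qed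

lemma supp_ee: "supp (ee l)" unfolding ee_def by (rule supp_idft)
lemma hat_ee: "m < n \<Longrightarrow> hat (ee l) m = (if m \<in> cs l then 1 else 0)" unfolding ee_def by (simp add: hat_idft)

lemma rmul_uu_gv: "rmul n (uu l) (gv l) = ee l"
  by (rule hat_inj) (auto simp: supp_rmul supp_ee hat_rmul hat_ee uu_def hat_idft hat_gv_zero)

lemma rmul_ee_gv: "rmul n (ee l) (gv l) = gv l"
  by (rule hat_inj) (auto simp: supp_rmul supp_gv hat_rmul hat_ee hat_gv_zero)

lemma ideal_char:
  "ideal_gen (Fsub (q ^ w)) n (gpoly \<eta> q n l) = {c \<in> vecs (Fsub (q ^ w)) n. rmul n (ee l) c = c}"
proof -
  have gvd: "(\<lambda>k. Polynomial.coeff (gpoly \<eta> q n l) k) = gv l" unfolding gv_def ..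
  show ?thesis
    unfolding set_eq_iff
  proof (intro allI iffI)
    fix c assume "c \<in> ideal_gen (Fsub (q ^ w)) n (gpoly \<eta> q n l)"
    then obtain b where b: "b \<in> vecs (Fsub (q ^ w)) n" "c = rmul n b (gv l)"
      unfolding ideal_gen_def gvd by auto
    have "c \<in> vecs (Fsub (q ^ w)) n" using b rmul_vecs[OF b(1) vecs_q_sub[OF gv_Fq]] by simp
    moreover have "rmul n (ee l) c = c"
    proof -
      have "rmul n (ee l) (rmul n b (gv l)) = rmul n (rmul n b (gv l)) (ee l)" by (rule rmul_comm)
      also have "\<dots> = rmul n b (rmul n (gv l) (ee l))" by (rule rmul_assoc)
      also have "\<dots> = rmul n b (gv l)" by (simp add: rmul_comm[of "gv l"] rmul_ee_gv)
      finally show ?thesis using b by simp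
    qed
    ultimately show "c \<in> {c \<in> vecs (Fsub (q ^ w)) n. rmul n (ee l) c = c}" by simp
  next
    fix c assume "c \<in> {c \<in> vecs (Fsub (q ^ w)) n. rmul n (ee l) c = c}"
    then have c: "c \<in> vecs (Fsub (q ^ w)) n" "rmul n (ee l) c = c" by auto
    have "c = rmul n (rmul n (uu l) (gv l)) c" using c(2) by (simp add: rmul_uu_gv)
    also have "\<dots> = rmul n c (rmul n (uu l) (gv l))" by (rule rmul_comm)
    also have "\<dots> = rmul n (rmul n c (uu l)) (gv l)" by (rule rmul_assoc[symmetric])
    finally have "c = rmul n (rmul n c (uu l)) (gv l)" .
    moreover have "rmul n c (uu l) \<in> vecs (Fsub (q ^ w)) n" using rmul_vecs[OF c(1) vecs_q_sub[OF uu_Fq]] by simp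
    ultimately show "c \<in> ideal_gen (Fsub (q ^ w)) n (gpoly \<eta> q n l)" unfolding ideal_gen_def gvd by auto
  qed
qed

lemma Jid_char: "Jid q t n \<eta> l = {c \<in> vecs (Fsub (q ^ t)) n. rmul n (ee l) c = c}"
  unfolding Jid_def by (rule ideal_char)

lemma Kid_char: "Kid q n \<eta> l = {c \<in> vecs (Fsub q) n. rmul n (ee l) c = c}"
  unfolding Kid_def using ideal_char[of 1 l] by simp

end

context cyc begin

definition E :: "nat \<Rightarrow> nat \<Rightarrow> 'e" where "E i = ee (int (ell i))"

lemma E_Fq: "E i \<in> vecs (Fsub q) n" unfolding E_def by (rule ee_Fq)
lemma supp_E: "supp (E i)" unfolding E_def by (rule supp_ee)
lemma hat_E: "m < n \<Longrightarrow> hat (E i) m = (if m \<in> cs (int (ell i)) then 1 else 0)" unfolding E_def by (rule hat_ee)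

lemma Jid_E: "Jid q t n \<eta> (int (ell i)) = {c \<in> vecs (Fsub (q ^ t)) n. rmul n (E i) c = c}"
  unfolding E_def by (rule Jid_char)
lemma Kid_E: "Kid q n \<eta> (int (ell i)) = {c \<in> vecs (Fsub q) n. rmul n (E i) c = c}"
  unfolding E_def by (rule Kid_char)

lemma E_orth: "i < s \<Longrightarrow> j < s \<Longrightarrow> i \<noteq> j \<Longrightarrow> rmul n (E i) (E j) = zvec"
  by (rule hat_inj) (auto simp: supp_rmul supp_zvec hat_rmul hat_E hat_zvec dest: part_unique)

lemma E_idem: "rmul n (E i) (E i) = E i"
  by (rule hat_inj) (auto simp: supp_rmul supp_E hat_rmul hat_E)

lemma sum_ind: "m < n \<Longrightarrow> (\<Sum>i<s. (if m \<in> cs (int (ell i)) then 1 else 0) * (x::'e)) = x"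
proof -
  assume m: "m < n"
  obtain i0 where i0: "i0 < s" "m \<in> cs (int (ell i0))" using part_ex[OF m] by blast
  have "(\<Sum>i<s. (if m \<in> cs (int (ell i)) then 1 else 0) * x) = (\<Sum>i<s. if i = i0 then x else 0)"
    by (rule sum.cong[OF refl]) (use i0 part_unique in auto)
  also have "\<dots> = x" using i0 by simp
  finally show ?thesis .
qed

lemma decomp: "supp c \<Longrightarrow> c = (\<lambda>k. \<Sum>i<s. rmul n (E i) c k)"
  by (rule hat_inj) (auto simp: supp_sum supp_rmul hat_sum hat_rmul hat_E sum_ind)

lemma rmul_E_zvec: "rmul n (E i) zvec = zvec" by (rule rmul_zvec)

lemma hat_iter_shift: "supp a \<Longrightarrow> hat ((cshift n ^^ j) a) m = \<eta> ^ (j * m) * hat a m \<and> supp ((cshift n ^^ j) a)"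
proof (induction j)
  case 0 then show ?case by simp
next
  case (Suc j)
  then show ?case by (simp add: hat_shift supp_shift power_add mult.assoc)
qed

lemma rmul_as_shifts:
  assumes "supp a"
  shows "rmul n x a = (\<lambda>k. \<Sum>j<n. x j * (cshift n ^^ j) a k)"
proof (rule hat_inj)
  show "supp (rmul n x a)" by (rule supp_rmul)
  show "supp (\<lambda>k. \<Sum>j<n. x j * (cshift n ^^ j) a k)"
    by (rule supp_sum, rule supp_scale) (use assms hat_iter_shift in blast)
  fix m assume "m < n"
  have "hat (\<lambda>k. \<Sum>j<n. x j * (cshift n ^^ j) a k) m = (\<Sum>j<n. x j * hat ((cshift n ^^ j) a) m)"
    by (simp add: hat_sum hat_scale)
  also have "\<dots> = (\<Sum>j<n. x j * \<eta> ^ (j * m)) * hat a m"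
    using hat_iter_shift[OF assms] by (simp add: sum_distrib_right mult.assoc)
  also have "\<dots> = hat (rmul n x a) m" using hat_rmul[of x a m] unfolding hat_def by simp
  finally show "hat (rmul n x a) m = hat (\<lambda>k. \<Sum>j<n. x j * (cshift n ^^ j) a k) m" by simp
qed

lemma code_vecs: "cyclic_code q t n (C :: (nat \<Rightarrow> 'e) set) \<Longrightarrow> C \<subseteq> vecs (Fsub (q ^ t)) n"
  unfolding cyclic_code_def lin_code_def by auto
lemma code_zvec: "cyclic_code q t n (C :: (nat \<Rightarrow> 'e) set) \<Longrightarrow> zvec \<in> C"
  unfolding cyclic_code_def lin_code_def by auto
lemma code_add: "cyclic_code q t n (C :: (nat \<Rightarrow> 'e) set) \<Longrightarrow> a \<in> C \<Longrightarrow> b \<in> C \<Longrightarrow> (\<lambda>k. a k + b k) \<in> C"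
  unfolding cyclic_code_def lin_code_def by auto
lemma code_scale: "cyclic_code q t n (C :: (nat \<Rightarrow> 'e) set) \<Longrightarrow> c \<in> Fsub q \<Longrightarrow> a \<in> C \<Longrightarrow> (\<lambda>k. c * a k) \<in> C"
  unfolding cyclic_code_def lin_code_def by auto
lemma code_shift: "cyclic_code q t n (C :: (nat \<Rightarrow> 'e) set) \<Longrightarrow> a \<in> C \<Longrightarrow> cshift n a \<in> C"
  unfolding cyclic_code_def by auto
lemma code_iter: "cyclic_code q t n (C :: (nat \<Rightarrow> 'e) set) \<Longrightarrow> a \<in> C \<Longrightarrow> (cshift n ^^ j) a \<in> C"
  by (induction j) (auto simp: code_shift)
lemma code_sum:
  fixes C :: "(nat \<Rightarrow> 'e) set"
  assumes C: "cyclic_code q t n C"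
  shows "finite A \<Longrightarrow> (\<And>i. i \<in> A \<Longrightarrow> f i \<in> C) \<Longrightarrow> (\<lambda>k. \<Sum>i\<in>A. f i k) \<in> C"
proof (induction A rule: finite_induct)
  case empty then show ?case using code_zvec[OF C] by (simp add: zvec_def)
next
  case (insert x A)
  then show ?case using code_add[OF C, of "f x" "\<lambda>k. \<Sum>i\<in>A. f i k"] by simp
qed

lemma code_rmul:
  fixes C :: "(nat \<Rightarrow> 'e) set"
  assumes C: "cyclic_code q t n C" and x: "x \<in> vecs (Fsub q) n" and a: "a \<in> C"
  shows "rmul n x a \<in> C"
proof -
  have "supp a" using code_vecs[OF C] a vecs_supp by blast
  then have "rmul n x a = (\<lambda>k. \<Sum>j<n. x j * (cshift n ^^ j) a k)" by (rule rmul_as_shifts)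
  also have "\<dots> \<in> C"
    by (rule code_sum[OF C]) (use x in \<open>auto simp: vecs_def intro!: code_scale[OF C] code_iter[OF C a]\<close>)
  finally show ?thesis .
qed

end

context base begin

definition rot :: "nat \<Rightarrow> (nat \<Rightarrow> 'e) \<Rightarrow> nat \<Rightarrow> 'e" where
  "rot j c = (\<lambda>i. if i < n then c (nat ((int i - int j) mod int n)) else 0)"

lemma nat_mod_lt: "nat (x mod int n) < n" using n1 by (simp add: nat_less_iff)
lemma int_nat_mod: "int (nat (x mod int n)) = x mod int n" using n1 by simp

lemma tau1: "k < n \<Longrightarrow> tau n r 1 X k = X k ^ r"
proof -
  assume k: "k < n"
  have "tau n r 1 X k = (\<Sum>i<n. if (1 * int i) mod int n = int k then X i ^ r else 0)"
    unfolding tau_def using k by simp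
  also have "\<dots> = (\<Sum>i<n. if i = k then X i ^ r else 0)"
    by (intro sum.cong refl) auto
  finally have "tau n r 1 X k = (\<Sum>i<n. if i = k then X i ^ r else 0)" .
  then show ?thesis using k by simp
qed

lemma neg_idx: "i < n \<Longrightarrow> v < n \<Longrightarrow> ((-1) * int i) mod int n = int v \<longleftrightarrow> i = nat ((- int v) mod int n)"
proof -
  assume i: "i < n" and v: "v < n"
  have iv: "int i mod int n = int i" "int v mod int n = int v" using i v by simp_all
  have "((-1) * int i) mod int n = int v \<longleftrightarrow> [- int i = int v] (mod int n)"
    using iv by (simp add: cong_def)
  also have "\<dots> \<longleftrightarrow> [int i = - int v] (mod int n)"
    using cong_minus_minus_iff[of "int i" "- int v" "int n"] by simp
  also have "\<dots> \<longleftrightarrow> int i = (- int v) mod int n" using iv by (simp add: cong_def)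
  also have "\<dots> \<longleftrightarrow> i = nat ((- int v) mod int n)" using int_nat_mod[of "- int v"] by linarith
  finally show ?thesis .
qed

lemma tau_neg: "v < n \<Longrightarrow> tau n r (-1) c v = c (nat ((- int v) mod int n)) ^ r"
proof -
  assume v: "v < n"
  have "tau n r (-1) c v = (\<Sum>i<n. if ((-1) * int i) mod int n = int v then c i ^ r else 0)"
    unfolding tau_def using v by simp
  also have "\<dots> = (\<Sum>i<n. if i = nat ((- int v) mod int n) then c i ^ r else 0)"
    using v by (intro sum.cong refl) (simp only: lessThan_iff neg_idx)
  finally have "tau n r (-1) c v = (\<Sum>i<n. if i = nat ((- int v) mod int n) then c i ^ r else 0)" .
  then show ?thesis using nat_mod_lt by simp
qed

lemma add_idx: "u < n \<Longrightarrow> v < n \<Longrightarrow> k < n \<Longrightarrow> (u + v) mod n = k \<longleftrightarrow> v = nat ((int k - int u) mod int n)"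
proof -
  assume u: "u < n" and v: "v < n" and k: "k < n"
  have "(u + v) mod n = k \<longleftrightarrow> (int u + int v) mod int n = int k" using k
    by (metis of_nat_add of_nat_eq_iff zmod_int mod_less)
  also have "\<dots> \<longleftrightarrow> [int u + int v = int k] (mod int n)" using k by (simp add: cong_def)
  also have "\<dots> \<longleftrightarrow> [int v = int k - int u] (mod int n)" by (simp add: cong_iff_dvd_diff algebra_simps)
  also have "\<dots> \<longleftrightarrow> int v = (int k - int u) mod int n" using v by (simp add: cong_def)
  also have "\<dots> \<longleftrightarrow> v = nat ((int k - int u) mod int n)" using int_nat_mod[of "int k - int u"] by linarith
  finally show ?thesis .
qed

lemma rmul_alt: "k < n \<Longrightarrow> rmul n a b k = (\<Sum>u<n. a u * b (nat ((int k - int u) mod int n)))"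
proof -
  assume k: "k < n"
  have "rmul n a b k = (\<Sum>u<n. \<Sum>v<n. if (u + v) mod n = k then a u * b v else 0)"
    unfolding rmul_def using k by simp
  also have "\<dots> = (\<Sum>u<n. \<Sum>v<n. if v = nat ((int k - int u) mod int n) then a u * b v else 0)"
    using k by (intro sum.cong refl) (simp only: lessThan_iff add_idx)
  finally have "rmul n a b k = (\<Sum>u<n. \<Sum>v<n. if v = nat ((int k - int u) mod int n) then a u * b v else 0)" .
  then show ?thesis using nat_mod_lt by simp
qed

lemma idx_neg_sub: "nat ((- int (nat ((int k - int u) mod int n))) mod int n) = nat ((int u - int k) mod int n)"
proof -
  have "(- int (nat ((int k - int u) mod int n))) mod int n = (- ((int k - int u) mod int n)) mod int n"
    by (simp only: int_nat_mod)
  also have "\<dots> = (- (int k - int u)) mod int n" by (simp add: mod_minus_eq)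
  finally show ?thesis by simp
qed

lemma core:
  assumes B: "\<And>v. v < n \<Longrightarrow> B v = F (c (nat ((- int v) mod int n)))" and k: "k < n"
  shows "rmul n A B k = (\<Sum>u<n. A u * F (rot k c u))"
  unfolding rmul_alt[OF k] rot_def
  by (intro sum.cong refl) (simp only: B nat_mod_lt idx_neg_sub lessThan_iff if_True)

lemma trace_sum: "trace q t (\<Sum>i\<in>A. f i :: 'e) = (\<Sum>i\<in>A. trace q t (f i))"
  unfolding trace_def by (simp add: frob_sum) (rule sum.swap)

lemma bform_eq: "bform q t n \<delta> a c = (\<lambda>k. if k < n then vform q t n \<delta> a (rot k c) else 0)"
proof
  fix k show "bform q t n \<delta> a c k = (if k < n then vform q t n \<delta> a (rot k c) else 0)"
  proof (cases "k < n")
    case False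
    then show ?thesis unfolding bform_def tau_def by (cases \<delta>) auto
  next
    case k: True
    have tr: "(\<Sum>w<t. tau n (q ^ w) 1 X k) = trace q t (X k)" for X :: "nat \<Rightarrow> 'e"
      unfolding trace_def by (rule sum.cong[OF refl], rule tau1[OF k])
    show ?thesis
    proof (cases \<delta>)
      case Star
      have "rmul n a (\<lambda>i. \<Sum>w\<in>{1..<t}. tau n (q ^ w) (-1) c i) k = (\<Sum>u<n. a u * phi q t (rot k c u))"
        by (rule core[OF _ k]) (simp add: tau_neg phi_def)
      then show ?thesis using k Star unfolding bform_def vform_def by (simp add: tr trace_sum)
    next
      case Ord
      have "rmul n a (tau n 1 (-1) c) k = (\<Sum>u<n. a u * (\<lambda>x. x) (rot k c u))"
        by (rule core[OF _ k]) (simp add: tau_neg)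
      then show ?thesis using k Ord unfolding bform_def vform_def by (simp add: tr trace_sum)
    next
      case (Herm \<gamma>)
      have "rmul n (\<lambda>i. \<gamma> * a i) (tau n (q ^ (t div 2)) (-1) c) k = (\<Sum>u<n. (\<gamma> * a u) * (\<lambda>x. x ^ (q ^ (t div 2))) (rot k c u))"
        by (rule core[OF _ k]) (simp add: tau_neg)
      then show ?thesis using k Herm unfolding bform_def vform_def by (simp add: tr trace_sum mult.assoc)
    qed
  qed
qed

lemma rot0: "supp c \<Longrightarrow> rot 0 c = c"
  unfolding rot_def supp_def by (auto simp: fun_eq_iff)

lemma rot_Suc: "rot (Suc j) c = cshift n (rot j c)"
proof
  fix i show "rot (Suc j) c i = cshift n (rot j c) i"
  proof (cases "i < n")
    case True
    have a: "(i + n - 1) mod n < n" using n1 by simp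
    have e1: "int ((i + n - 1) mod n) = (int i - 1) mod int n"
    proof -
      have "int ((i + n - 1) mod n) = int (i + n - 1) mod int n" by (simp add: zmod_int)
      also have "int (i + n - 1) = (int i - 1) + int n" using n1 by simp
      finally show ?thesis by simp
    qed
    have "(int ((i + n - 1) mod n) - int j) mod int n = ((int i - 1) mod int n - int j) mod int n"
      by (simp only: e1)
    also have "\<dots> = (int i - 1 - int j) mod int n" by (rule mod_diff_left_eq)
    also have "int i - 1 - int j = int i - int (Suc j)" by simp
    finally have "(int ((i + n - 1) mod n) - int j) mod int n = (int i - int (Suc j)) mod int n" .
    then show ?thesis unfolding rot_def cshift_def using True a by simp
  next
    case False then show ?thesis by (simp add: rot_def cshift_def)
  qed
qed

end

context base begin

definition Wd :: "nat \<Rightarrow> 'e form_kind \<Rightarrow> 'e \<Rightarrow> 'e" where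
  "Wd t \<delta> x = (case \<delta> of Ord \<Rightarrow> x | Herm \<gamma> \<Rightarrow> \<gamma> * x ^ (q ^ (t div 2)) | Star \<Rightarrow> phi q t x)"

lemma zpow: "(0::'e) ^ (q ^ w) = 0" using q_pos by simp

lemma Wd0: "Wd t \<delta> 0 = 0"
  unfolding Wd_def phi_def by (cases \<delta>) (auto simp: zpow)

lemma vform_W: "vform q t n \<delta> a b = trace q t (\<Sum>j<n. a j * Wd t \<delta> (b j))"
  unfolding vform_def Wd_def trace_sum by (cases \<delta>) (auto simp: mult_ac)

lemma supp_W: "supp c \<Longrightarrow> supp (\<lambda>j. Wd t \<delta> (c j))" unfolding supp_def by (simp add: Wd0)

lemma W_rmul:
  assumes e: "e \<in> vecs (Fsub q) n"
  shows "(\<lambda>j. Wd t \<delta> (rmul n e c j)) = rmul n e (\<lambda>j. Wd t \<delta> (c j))"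
proof (cases \<delta>)
  case Star
  have "(\<lambda>j. phi q t (rmul n e c j)) = (\<lambda>j. \<Sum>w\<in>{1..<t}. rmul n e (\<lambda>i. c i ^ (q ^ w)) j)"
    unfolding phi_def using frob_rmul[OF e] by simp
  also have "\<dots> = rmul n e (\<lambda>j. \<Sum>w\<in>{1..<t}. c j ^ (q ^ w))" by (rule rmul_sum[symmetric]) simp
  finally show ?thesis using Star unfolding Wd_def phi_def by simp
next
  case Ord then show ?thesis unfolding Wd_def by simp
next
  case (Herm \<gamma>)
  have "(\<lambda>j. \<gamma> * rmul n e c j ^ (q ^ (t div 2))) = (\<lambda>j. \<gamma> * rmul n e (\<lambda>i. c i ^ (q ^ (t div 2))) j)"
    using frob_rmul[OF e] by simp
  also have "\<dots> = rmul n e (\<lambda>j. \<gamma> * c j ^ (q ^ (t div 2)))" by (rule rmul_scale[symmetric])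
  finally show ?thesis using Herm unfolding Wd_def by simp
qed

lemma eta_neg: "k < n \<Longrightarrow> \<eta> ^ (j * ((n - k) mod n)) = inverse \<eta> ^ (j * k)"
proof -
  assume k: "k < n"
  have "\<eta> ^ (j * ((n - k) mod n)) = \<eta> ^ (j * (n - k))"
    by (metis eta_mod_mult mult.commute)
  moreover have "\<eta> ^ (j * (n - k)) * \<eta> ^ (j * k) = 1"
  proof -
    have "\<eta> ^ (j * (n - k)) * \<eta> ^ (j * k) = \<eta> ^ (n * j)" using k
      by (simp flip: power_add add: algebra_simps)
    also have "\<dots> = 1" by (simp add: power_mult eta_n)
    finally show ?thesis .
  qed
  ultimately show ?thesis using eta_ne0 by (simp add: power_inverse field_simps)
qed

lemma parseval:
  assumes "supp y"
  shows "(\<Sum>j<n. a j * y j) = inverse (of_nat n) * (\<Sum>k<n. hat y k * hat a ((n - k) mod n))"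
proof -
  have "(\<Sum>j<n. a j * y j) = (\<Sum>j<n. a j * (inverse (of_nat n) * (\<Sum>k<n. hat y k * inverse \<eta> ^ (j * k))))"
    by (intro sum.cong refl) (metis inversion[OF assms] lessThan_iff)
  also have "\<dots> = inverse (of_nat n) * (\<Sum>k<n. hat y k * (\<Sum>j<n. a j * inverse \<eta> ^ (j * k)))"
  proof -
    have "(\<Sum>j<n. a j * (inverse (of_nat n) * (\<Sum>k<n. hat y k * inverse \<eta> ^ (j * k))))
        = inverse (of_nat n) * (\<Sum>j<n. \<Sum>k<n. hat y k * (a j * inverse \<eta> ^ (j * k)))"
      by (simp only: sum_distrib_left) (simp only: mult_ac)
    also have "\<dots> = inverse (of_nat n) * (\<Sum>k<n. \<Sum>j<n. hat y k * (a j * inverse \<eta> ^ (j * k)))"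
      by (subst sum.swap) (rule refl)
    also have "\<dots> = inverse (of_nat n) * (\<Sum>k<n. hat y k * (\<Sum>j<n. a j * inverse \<eta> ^ (j * k)))"
      by (simp only: sum_distrib_left)
    finally show ?thesis .
  qed
  also have "\<dots> = inverse (of_nat n) * (\<Sum>k<n. hat y k * hat a ((n - k) mod n))"
    unfolding hat_def by (intro arg_cong[where f="\<lambda>x. inverse (of_nat n) * x"] sum.cong refl) (simp add: eta_neg)
  finally show ?thesis .
qed

lemma trace0: "trace q t (0::'e) = 0" unfolding trace_def by (simp add: zpow)

end

context cyc begin

lemma P_main:
  assumes i: "i < s" and a: "supp a" and c: "supp c"
  shows "vform q t n \<delta> (rmul n (E i) a) c = vform q t n \<delta> a (rmul n (E (mu' i)) c)"
proof -
  let ?W = "\<lambda>x. (\<lambda>j. Wd t \<delta> (x j))"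
  have sW: "supp (?W c)" using c by (rule supp_W)
  have "(\<Sum>j<n. rmul n (E i) a j * ?W c j) = inverse (of_nat n) * (\<Sum>k<n. hat (?W c) k * hat (rmul n (E i) a) ((n - k) mod n))"
    by (rule parseval[OF sW])
  also have "\<dots> = inverse (of_nat n) * (\<Sum>k<n. hat (rmul n (E (mu' i)) (?W c)) k * hat a ((n - k) mod n))"
  proof (intro arg_cong[where f="\<lambda>x. inverse (of_nat n) * x"] sum.cong refl)
    fix k assume "k \<in> {..<n}"
    then have k: "k < n" by simp
    have nk: "(n - k) mod n < n" using n1 by simp
    have iff: "(n - k) mod n \<in> cs (int (ell i)) \<longleftrightarrow> k \<in> cs (int (ell (mu' i)))"
      using mu_neg[OF i nk] mod_neg_neg[OF k] by simp
    show "hat (?W c) k * hat (rmul n (E i) a) ((n - k) mod n) = hat (rmul n (E (mu' i)) (?W c)) k * hat a ((n - k) mod n)"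
      unfolding hat_rmul hat_E[OF k] hat_E[OF nk] using iff by simp
  qed
  also have "\<dots> = (\<Sum>j<n. a j * rmul n (E (mu' i)) (?W c) j)"
    by (rule parseval[symmetric]) (rule supp_rmul)
  also have "rmul n (E (mu' i)) (?W c) = ?W (rmul n (E (mu' i)) c)"
    by (rule W_rmul[symmetric]) (rule E_Fq)
  finally show ?thesis unfolding vform_W by simp
qed

lemma vform_zvec1: "vform q t n \<delta> zvec (c :: nat \<Rightarrow> 'e) = 0"
  unfolding vform_def zvec_def by (cases \<delta>) (simp_all add: trace0)

lemma rot_mem:
  fixes C :: "(nat \<Rightarrow> 'e) set"
  assumes C: "cyclic_code q t n C" and c: "c \<in> C"
  shows "rot j c \<in> C"
proof (induction j)
  case 0
  have "supp c" using code_vecs[OF C] c vecs_supp by blast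
  then show ?case using rot0 c by simp
next
  case (Suc j) then show ?case using code_shift[OF C] rot_Suc by simp
qed

lemma dual_bform:
  fixes C :: "(nat \<Rightarrow> 'e) set"
  assumes C: "cyclic_code q t n C" and a: "a \<in> vecs (Fsub (q ^ t)) n"
  shows "a \<in> dual q t n \<delta> C \<longleftrightarrow> (\<forall>c\<in>C. bform q t n \<delta> a c = zvec)"
proof
  assume d: "a \<in> dual q t n \<delta> C"
  show "\<forall>c\<in>C. bform q t n \<delta> a c = zvec"
  proof
    fix c assume "c \<in> C"
    then have "\<forall>k. vform q t n \<delta> a (rot k c) = 0" using d rot_mem[OF C] unfolding dual_def by auto
    then show "bform q t n \<delta> a c = zvec" unfolding bform_eq zvec_def by auto
  qed
next
  assume b: "\<forall>c\<in>C. bform q t n \<delta> a c = zvec"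
  have "vform q t n \<delta> a c = 0" if c: "c \<in> C" for c
  proof -
    have "supp c" using code_vecs[OF C] c vecs_supp by blast
    then have "vform q t n \<delta> a c = bform q t n \<delta> a c 0" unfolding bform_eq using n1 rot0 by simp
    then show ?thesis using b c unfolding zvec_def by simp
  qed
  then show "a \<in> dual q t n \<delta> C" unfolding dual_def using a by simp
qed

end

context cyc begin

abbreviation Jt :: "nat \<Rightarrow> nat \<Rightarrow> (nat \<Rightarrow> 'e) set" where "Jt t i \<equiv> Jid q t n \<eta> (int (ell i))"
abbreviation Ki :: "nat \<Rightarrow> (nat \<Rightarrow> 'e) set" where "Ki i \<equiv> Kid q n \<eta> (int (ell i))"

lemma E_Fqt: "E i \<in> vecs (Fsub (q ^ t)) n" using E_Fq vecs_q_sub by blast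

lemma J_mem: "c \<in> Jt t i \<longleftrightarrow> c \<in> vecs (Fsub (q ^ t)) n \<and> rmul n (E i) c = c"
  using Jid_E by blast

lemma K_mem: "c \<in> Ki i \<longleftrightarrow> c \<in> vecs (Fsub q) n \<and> rmul n (E i) c = c"
  using Kid_E by blast

lemma pi_idem: "rmul n (E i) (rmul n (E i) c) = rmul n (E i) c"
  by (simp add: rmul_assoc[symmetric] E_idem)

lemma pi_in_J: "c \<in> vecs (Fsub (q ^ t)) n \<Longrightarrow> rmul n (E i) c \<in> Jt t i"
  unfolding J_mem using rmul_vecs[OF E_Fqt] pi_idem by blast

lemma zvec_J: "zvec \<in> Jt t i" unfolding J_mem by (simp add: vecs_zvec rmul_zvec)

lemma J_vecs: "c \<in> Jt t i \<Longrightarrow> c \<in> vecs (Fsub (q ^ t)) n" using J_mem by blast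

lemma zvec_dual: "zvec \<in> dual q t n \<delta> (C :: (nat \<Rightarrow> 'e) set)" unfolding dual_def by (simp add: vecs_zvec vform_zvec1)

lemma dual_J:
  fixes C :: "(nat \<Rightarrow> 'e) set"
  assumes C: "cyclic_code q t n C" and i: "i < s"
  shows "dual q t n \<delta> C \<inter> Jt t i = ldual q t n \<delta> (Jt t i) (C \<inter> Jt t (mu' i))"
  unfolding set_eq_iff
proof (intro allI iffI)
  fix a assume "a \<in> dual q t n \<delta> C \<inter> Jt t i"
  then have "a \<in> Jt t i" "\<forall>c\<in>C. bform q t n \<delta> a c = zvec" using dual_bform[OF C J_vecs] by auto
  then show "a \<in> ldual q t n \<delta> (Jt t i) (C \<inter> Jt t (mu' i))" unfolding ldual_def by auto
next
  fix a assume "a \<in> ldual q t n \<delta> (Jt t i) (C \<inter> Jt t (mu' i))"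
  then have aJ: "a \<in> Jt t i" and b: "\<forall>c\<in>C \<inter> Jt t (mu' i). bform q t n \<delta> a c = zvec"
    unfolding ldual_def by auto
  have av: "a \<in> vecs (Fsub (q ^ t)) n" and ae: "rmul n (E i) a = a" using aJ J_mem by auto
  have "\<forall>c\<in>C. bform q t n \<delta> a c = zvec"
  proof
    fix c assume c: "c \<in> C"
    show "bform q t n \<delta> a c = zvec"
      unfolding bform_eq
    proof (rule ext)
      fix k show "(if k < n then vform q t n \<delta> a (rot k c) else 0) = zvec k"
      proof (cases "k < n")
        case True
        have rc: "rot k c \<in> C" using rot_mem[OF C c] .
        then have rcv: "rot k c \<in> vecs (Fsub (q ^ t)) n" using code_vecs[OF C] by blast
        let ?c' = "rmul n (E (mu' i)) (rot k c)"
        have c'C: "?c' \<in> C \<inter> Jt t (mu' i)" using code_rmul[OF C E_Fq rc] pi_in_J[OF rcv] by blast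
        have "vform q t n \<delta> a (rot k c) = vform q t n \<delta> (rmul n (E i) a) (rot k c)" using ae by simp
        also have "\<dots> = vform q t n \<delta> a ?c'"
          using P_main[OF i vecs_supp[OF av] vecs_supp[OF rcv]] .
        also have "\<dots> = bform q t n \<delta> a ?c' 0"
          unfolding bform_eq using n1 rot0[OF supp_rmul] by simp
        also have "\<dots> = 0" using b c'C unfolding zvec_def by simp
        finally show ?thesis using True unfolding zvec_def by simp
      qed (simp add: zvec_def)
    qed
  qed
  then show "a \<in> dual q t n \<delta> C \<inter> Jt t i" using dual_bform[OF C av] aJ by simp
qed

lemma part_a:
  fixes C :: "(nat \<Rightarrow> 'e) set"
  assumes C: "cyclic_code q t n C"
  shows "lcd q t n \<delta> C \<longleftrightarrow> (\<forall>i<s. (C \<inter> Jt t i) \<inter> (dual q t n \<delta> C \<inter> Jt t i) = {zvec})"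
proof
  assume l: "lcd q t n \<delta> C"
  show "\<forall>i<s. (C \<inter> Jt t i) \<inter> (dual q t n \<delta> C \<inter> Jt t i) = {zvec}"
    using l code_zvec[OF C] zvec_dual zvec_J unfolding lcd_def by blast
next
  assume r: "\<forall>i<s. (C \<inter> Jt t i) \<inter> (dual q t n \<delta> C \<inter> Jt t i) = {zvec}"
  have "a = zvec" if a: "a \<in> C" "a \<in> dual q t n \<delta> C" for a
  proof -
    have av: "a \<in> vecs (Fsub (q ^ t)) n" using a code_vecs[OF C] by blast
    have "rmul n (E i) a = zvec" if i: "i < s" for i
    proof -
      have "rmul n (E i) a \<in> C" using code_rmul[OF C E_Fq a(1)] .
      moreover have "rmul n (E i) a \<in> Jt t i" using pi_in_J[OF av] .
      moreover have "rmul n (E i) a \<in> dual q t n \<delta> C"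
      proof -
        have "vform q t n \<delta> (rmul n (E i) a) c = 0" if c: "c \<in> C" for c
        proof -
          have cv: "c \<in> vecs (Fsub (q ^ t)) n" using c code_vecs[OF C] by blast
          have "vform q t n \<delta> (rmul n (E i) a) c = vform q t n \<delta> a (rmul n (E (mu' i)) c)"
            using P_main[OF i vecs_supp[OF av] vecs_supp[OF cv]] .
          also have "\<dots> = 0" using a(2) code_rmul[OF C E_Fq c] unfolding dual_def by auto
          finally show ?thesis .
        qed
        then show ?thesis unfolding dual_def using pi_in_J[OF av] J_vecs by blast
      qed
      ultimately show ?thesis using r i by blast
    qed
    then have "a = (\<lambda>k. \<Sum>i<s. zvec k)" using decomp[OF vecs_supp[OF av]] by simp
    then show ?thesis by (simp add: zvec_def)
  qed
  then show "lcd q t n \<delta> C" unfolding lcd_def using code_zvec[OF C] zvec_dual by blast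
qed

end

context cyc begin

lemma ksub_inter:
  fixes C :: "(nat \<Rightarrow> 'e) set"
  assumes C: "cyclic_code q t n C"
  shows "ksub n (Ki i) (Jt t i) (C \<inter> Jt t i)"
  unfolding ksub_def
proof (intro conjI ballI)
  show "C \<inter> Jt t i \<subseteq> Jt t i" by blast
  show "zvec \<in> C \<inter> Jt t i" using code_zvec[OF C] zvec_J by blast
next
  fix a b assume a: "a \<in> C \<inter> Jt t i" and b: "b \<in> C \<inter> Jt t i"
  have "(\<lambda>k. a k + b k) \<in> C" using a b code_add[OF C] by blast
  moreover have "(\<lambda>k. a k + b k) \<in> Jt t i"
  proof -
    have "a \<in> vecs (Fsub (q ^ t)) n" "rmul n (E i) a = a" "b \<in> vecs (Fsub (q ^ t)) n" "rmul n (E i) b = b"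
      using a b J_mem by auto
    then show ?thesis unfolding J_mem by (simp add: vecs_add rmul_add)
  qed
  ultimately show "(\<lambda>k. a k + b k) \<in> C \<inter> Jt t i" by blast
next
  fix x a assume x: "x \<in> Ki i" and a: "a \<in> C \<inter> Jt t i"
  have xq: "x \<in> vecs (Fsub q) n" "rmul n (E i) x = x" using x K_mem by auto
  have "rmul n x a \<in> C" using code_rmul[OF C xq(1)] a by blast
  moreover have "rmul n x a \<in> Jt t i"
  proof -
    have "rmul n x a \<in> vecs (Fsub (q ^ t)) n" using rmul_vecs[OF vecs_q_sub[OF xq(1)]] a J_vecs by blast
    moreover have "rmul n (E i) (rmul n x a) = rmul n x a"
      using xq(2) by (simp add: rmul_assoc[symmetric])
    ultimately show ?thesis unfolding J_mem by simp
  qed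
  ultimately show "rmul n x a \<in> C \<inter> Jt t i" by blast
qed

definition build :: "nat \<Rightarrow> (nat \<Rightarrow> (nat \<Rightarrow> 'e) set) \<Rightarrow> (nat \<Rightarrow> 'e) set" where
  "build t D = {c \<in> vecs (Fsub (q ^ t)) n. \<forall>i<s. rmul n (E i) c \<in> D i}"

lemma code_determined:
  fixes C :: "(nat \<Rightarrow> 'e) set"
  assumes C: "cyclic_code q t n C"
  shows "C = build t (\<lambda>i. C \<inter> Jt t i)"
  unfolding build_def set_eq_iff
proof (intro allI iffI)
  fix c assume c: "c \<in> C"
  have cv: "c \<in> vecs (Fsub (q ^ t)) n" using c code_vecs[OF C] by blast
  show "c \<in> {c \<in> vecs (Fsub (q ^ t)) n. \<forall>i<s. rmul n (E i) c \<in> C \<inter> Jt t i}"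
    using cv code_rmul[OF C E_Fq c] pi_in_J[OF cv] by blast
next
  fix c assume c: "c \<in> {c \<in> vecs (Fsub (q ^ t)) n. \<forall>i<s. rmul n (E i) c \<in> C \<inter> Jt t i}"
  then have "c = (\<lambda>k. \<Sum>i<s. rmul n (E i) c k)" using decomp vecs_supp by blast
  also have "\<dots> \<in> C" by (rule code_sum[OF C]) (use c in auto)
  finally show "c \<in> C" .
qed

lemma one_Fq: "one \<in> vecs (Fsub q) n"
  unfolding vecs_def one_def using Fsub_1 Fsub_0[of 1] n1 by auto

lemma shift_Fq: "a \<in> vecs (Fsub (q ^ w)) n \<Longrightarrow> cshift n a \<in> vecs (Fsub (q ^ w)) n"
  unfolding vecs_def cshift_def using n1 by auto

lemma shift_rmul: "supp a \<Longrightarrow> cshift n a = rmul n (cshift n one) a"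
  by (rule hat_inj) (auto simp: supp_shift supp_rmul hat_shift hat_rmul supp_one hat_one)

lemma rmul_zvec_left: "rmul n zvec a = (zvec :: nat \<Rightarrow> 'e)"
  by (simp add: rmul_comm[of zvec] rmul_zvec)

lemma scale_rmul: "(\<lambda>k. c * rmul n (E i) a k) = rmul n (\<lambda>k. c * E i k) (rmul n (E i) a)"
proof -
  have "rmul n (\<lambda>k. c * E i k) (rmul n (E i) a) = rmul n (rmul n (E i) a) (\<lambda>k. c * E i k)" by (rule rmul_comm)
  also have "\<dots> = (\<lambda>k. c * rmul n (rmul n (E i) a) (E i) k)" by (rule rmul_scale)
  also have "rmul n (rmul n (E i) a) (E i) = rmul n (E i) a"
    by (simp add: rmul_comm[of _ "E i"] pi_idem)
  finally show ?thesis by simp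
qed

lemma build_cyclic:
  assumes D: "\<And>i. i < s \<Longrightarrow> ksub n (Ki i) (Jt t i) (D i)"
  shows "cyclic_code q t n (build t D)" and "\<And>i. i < s \<Longrightarrow> build t D \<inter> Jt t i = D i"
proof -
  have Dz: "zvec \<in> D i" and Dadd: "\<And>a b. a \<in> D i \<Longrightarrow> b \<in> D i \<Longrightarrow> (\<lambda>k. a k + b k) \<in> D i"
    and DK: "\<And>x a. x \<in> Ki i \<Longrightarrow> a \<in> D i \<Longrightarrow> rmul n x a \<in> D i"
    and DJ: "D i \<subseteq> Jt t i" if "i < s" for i using D[OF that] unfolding ksub_def by auto
  show "cyclic_code q t n (build t D)"
    unfolding cyclic_code_def lin_code_def
  proof (intro conjI ballI)
    show "build t D \<subseteq> vecs (Fsub (q ^ t)) n" unfolding build_def by auto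
    show "zvec \<in> build t D" unfolding build_def using vecs_zvec rmul_zvec Dz by auto
  next
    fix a b assume "a \<in> build t D" "b \<in> build t D"
    then show "(\<lambda>k. a k + b k) \<in> build t D" unfolding build_def by (auto simp: vecs_add rmul_add Dadd)
  next
    fix c :: 'e and a assume c: "c \<in> Fsub q" and a: "a \<in> build t D"
    have av: "a \<in> vecs (Fsub (q ^ t)) n" using a unfolding build_def by auto
    have "(\<lambda>k. c * a k) \<in> vecs (Fsub (q ^ t)) n"
      using av Fsub_q_sub[OF c] unfolding vecs_def by (auto intro: Fsub_mult)
    moreover have "rmul n (E i) (\<lambda>k. c * a k) \<in> D i" if i: "i < s" for i
    proof -
      have cE: "(\<lambda>k. c * E i k) \<in> Ki i"
      proof -
        have "(\<lambda>k. c * E i k) \<in> vecs (Fsub q) n"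
          using E_Fq[of i] c unfolding vecs_def by (auto intro: Fsub_mult)
        moreover have "rmul n (E i) (\<lambda>k. c * E i k) = (\<lambda>k. c * E i k)" by (simp add: rmul_scale E_idem)
        ultimately show ?thesis unfolding K_mem by simp
      qed
      have "rmul n (E i) (\<lambda>k. c * a k) = (\<lambda>k. c * rmul n (E i) a k)" by (rule rmul_scale)
      also have "\<dots> = rmul n (\<lambda>k. c * E i k) (rmul n (E i) a)" by (rule scale_rmul)
      also have "\<dots> \<in> D i" using DK[OF i cE] a i unfolding build_def by auto
      finally show ?thesis .
    qed
    ultimately show "(\<lambda>k. c * a k) \<in> build t D" unfolding build_def by auto
  next
    fix a assume a: "a \<in> build t D"
    have av: "a \<in> vecs (Fsub (q ^ t)) n" using a unfolding build_def by auto
    let ?X = "cshift n one"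
    have sa: "cshift n a = rmul n ?X a" using shift_rmul[OF vecs_supp[OF av]] .
    have "rmul n (E i) (cshift n a) \<in> D i" if i: "i < s" for i
    proof -
      have XE: "rmul n ?X (E i) \<in> Ki i"
      proof -
        have "rmul n ?X (E i) \<in> vecs (Fsub q) n"
          using rmul_vecs[of ?X 1 "E i"] shift_Fq[of one 1] one_Fq E_Fq by simp
        moreover have "rmul n (E i) (rmul n ?X (E i)) = rmul n ?X (E i)"
          by (metis rmul_assoc rmul_comm E_idem)
        ultimately show ?thesis unfolding K_mem by simp
      qed
      have "rmul n (E i) (cshift n a) = rmul n (E i) (rmul n ?X a)" using sa by simp
      also have "\<dots> = rmul n (rmul n ?X (E i)) (rmul n (E i) a)"
        by (metis rmul_assoc rmul_comm pi_idem)
      also have "\<dots> \<in> D i" using DK[OF i XE] a i unfolding build_def by auto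
      finally show ?thesis .
    qed
    moreover have "cshift n a \<in> vecs (Fsub (q ^ t)) n" using shift_Fq[OF av] .
    ultimately show "cshift n a \<in> build t D" unfolding build_def by auto
  qed
  fix i assume i: "i < s"
  show "build t D \<inter> Jt t i = D i"
    unfolding set_eq_iff
  proof (intro allI iffI)
    fix c assume h: "c \<in> build t D \<inter> Jt t i"
    then have "rmul n (E i) c = c" using J_mem by blast
    moreover have "rmul n (E i) c \<in> D i" using h i unfolding build_def by auto
    ultimately show "c \<in> D i" by simp
  next
    fix c assume c: "c \<in> D i"
    then have cJ: "c \<in> Jt t i" using DJ[OF i] by blast
    then have cv: "c \<in> vecs (Fsub (q ^ t)) n" and ce: "rmul n (E i) c = c" using J_mem by auto
    have "rmul n (E j) c \<in> D j" if j: "j < s" for j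
    proof (cases "j = i")
      case True then show ?thesis using ce c by simp
    next
      case False
      have "rmul n (E j) c = rmul n (E j) (rmul n (E i) c)" using ce by simp
      also have "\<dots> = rmul n (rmul n (E j) (E i)) c" by (simp add: rmul_assoc)
      also have "\<dots> = zvec" using E_orth[OF j i False] by (simp add: rmul_zvec_left)
      finally show ?thesis using Dz[OF j] by simp
    qed
    then show "c \<in> build t D \<inter> Jt t i" unfolding build_def using cv cJ by auto
  qed
qed

end

lemma count_pairs:
  fixes S Fx M :: "nat set" and mu :: "nat \<Rightarrow> nat" and B :: "nat \<Rightarrow> 'x set" and P :: "nat \<Rightarrow> 'x \<Rightarrow> 'x \<Rightarrow> bool"
  assumes fin: "finite S" and mu: "\<And>i. i \<in> S \<Longrightarrow> mu i \<in> S \<and> mu (mu i) = i"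
    and Fx: "Fx = {i \<in> S. mu i = i}" and MS: "M \<subseteq> {i \<in> S. mu i \<noteq> i}"
    and Mc: "\<And>i. i \<in> S \<Longrightarrow> mu i \<noteq> i \<Longrightarrow> (i \<in> M \<longleftrightarrow> mu i \<notin> M)"
  shows "card {f \<in> PiE S B. \<forall>i\<in>S. P i (f i) (f (mu i))} =
     (\<Prod>i\<in>Fx. card {D \<in> B i. P i D D}) *
     (\<Prod>h\<in>M. card {(D, E). D \<in> B h \<and> E \<in> B (mu h) \<and> P h D E \<and> P (mu h) E D})"
proof -
  define A1 where "A1 i = {D \<in> B i. P i D D}" for i
  define A2 where "A2 h = {(D, E). D \<in> B h \<and> E \<in> B (mu h) \<and> P h D E \<and> P (mu h) E D}" for h
  define L where "L = {f \<in> PiE S B. \<forall>i\<in>S. P i (f i) (f (mu i))}"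
  define g where "g f = (restrict f Fx, restrict (\<lambda>h. (f h, f (mu h))) M)" for f :: "nat \<Rightarrow> 'x"
  define g' where "g' y = restrict (\<lambda>i. if i \<in> Fx then fst y i else if i \<in> M then fst (snd y i) else snd (snd y (mu i))) S"
    for y :: "(nat \<Rightarrow> 'x) \<times> (nat \<Rightarrow> 'x \<times> 'x)"
  have FxS: "Fx \<subseteq> S" and MS': "M \<subseteq> S" using Fx MS by auto
  have other: "i \<in> S \<Longrightarrow> i \<notin> Fx \<Longrightarrow> i \<notin> M \<Longrightarrow> mu i \<in> M" for i using Fx Mc by auto
  have Mnf: "h \<in> M \<Longrightarrow> h \<notin> Fx" for h using MS Fx by auto
  have muM: "h \<in> M \<Longrightarrow> mu h \<notin> M \<and> mu h \<notin> Fx \<and> mu h \<in> S" for h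
  proof -
    assume h: "h \<in> M"
    then have hS: "h \<in> S" and hn: "mu h \<noteq> h" using MS by auto
    then have "mu h \<notin> M" using Mc h by blast
    moreover have "mu h \<in> S" "mu (mu h) = h" using mu hS by auto
    moreover then have "mu h \<notin> Fx" using Fx hn by auto
    ultimately show ?thesis by blast
  qed
  have bij: "bij_betw g L (PiE Fx A1 \<times> PiE M A2)"
  proof (rule bij_betw_byWitness[where f'=g'])
    show "\<forall>f\<in>L. g' (g f) = f"
    proof
      fix f assume f: "f \<in> L"
      show "g' (g f) = f"
      proof
        fix i show "g' (g f) i = f i"
        proof (cases "i \<in> S")
          case False then show ?thesis using f unfolding L_def g'_def by (auto simp: PiE_def extensional_def)
        next
          case True
          show ?thesis
          proof (cases "i \<in> Fx")
            case True then show ?thesis using FxS unfolding g'_def g_def by auto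
          next
            case nF: False
            show ?thesis
            proof (cases "i \<in> M")
              case True then show ?thesis using \<open>i \<in> S\<close> nF unfolding g'_def g_def by auto
            next
              case False
              then have "mu i \<in> M" using other \<open>i \<in> S\<close> nF by blast
              then show ?thesis using \<open>i \<in> S\<close> nF False mu unfolding g'_def g_def by auto
            qed
          qed
        qed
      qed
    qed
    show "\<forall>y\<in>PiE Fx A1 \<times> PiE M A2. g (g' y) = y"
    proof
      fix y assume y: "y \<in> PiE Fx A1 \<times> PiE M A2"
      obtain u v where uv: "y = (u, v)" by fastforce
      have u: "u \<in> PiE Fx A1" and v: "v \<in> PiE M A2" using y uv by auto
      have "restrict (g' y) Fx = u"
      proof
        fix i show "restrict (g' y) Fx i = u i"
          using u FxS uv unfolding g'_def by (auto simp: PiE_def extensional_def)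
      qed
      moreover have "restrict (\<lambda>h. (g' y h, g' y (mu h))) M = v"
      proof
        fix h show "restrict (\<lambda>h. (g' y h, g' y (mu h))) M h = v h"
        proof (cases "h \<in> M")
          case True
          have "mu (mu h) = h" using mu MS' True by blast
          then show ?thesis using True muM[OF True] Mnf[OF True] MS' uv unfolding g'_def by auto
        next
          case False then show ?thesis using v by (auto simp: PiE_def extensional_def)
        qed
      qed
      ultimately show "g (g' y) = y" unfolding g_def uv by simp
    qed
    show "g ` L \<subseteq> PiE Fx A1 \<times> PiE M A2"
    proof
      fix z assume "z \<in> g ` L"
      then obtain f where f: "f \<in> L" "z = g f" by blast
      have fB: "\<And>i. i \<in> S \<Longrightarrow> f i \<in> B i" and fP: "\<And>i. i \<in> S \<Longrightarrow> P i (f i) (f (mu i))"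
        using f(1) unfolding L_def by auto
      have "f i \<in> A1 i" if i: "i \<in> Fx" for i
      proof -
        have "i \<in> S" "mu i = i" using i Fx by auto
        then show ?thesis using fB[of i] fP[of i] by (simp add: A1_def)
      qed
      then have "restrict f Fx \<in> PiE Fx A1" by auto
      moreover have "restrict (\<lambda>h. (f h, f (mu h))) M \<in> PiE M A2"
      proof -
        have "(f h, f (mu h)) \<in> A2 h" if h: "h \<in> M" for h
        proof -
          have hS: "h \<in> S" and mh: "mu h \<in> S" "mu (mu h) = h" using h MS' mu by auto
          show ?thesis unfolding A2_def using fB[OF hS] fB[OF mh(1)] fP[OF hS] fP[OF mh(1)] mh(2) by simp
        qed
        then show ?thesis by auto
      qed
      ultimately show "z \<in> PiE Fx A1 \<times> PiE M A2" using f(2) unfolding g_def by simp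
    qed
    show "g' ` (PiE Fx A1 \<times> PiE M A2) \<subseteq> L"
    proof
      fix z assume "z \<in> g' ` (PiE Fx A1 \<times> PiE M A2)"
      then obtain u v where u: "u \<in> PiE Fx A1" and v: "v \<in> PiE M A2" and z: "z = g' (u, v)" by blast
      have vh: "fst (v h) \<in> B h \<and> snd (v h) \<in> B (mu h) \<and> P h (fst (v h)) (snd (v h)) \<and> P (mu h) (snd (v h)) (fst (v h))"
        if h: "h \<in> M" for h
      proof -
        have "v h \<in> A2 h" using v h by (rule PiE_mem)
        moreover obtain D E where "v h = (D, E)" by fastforce
        ultimately show ?thesis unfolding A2_def by simp
      qed
      have zval: "z i = (if i \<in> Fx then u i else if i \<in> M then fst (v i) else snd (v (mu i)))" if "i \<in> S" for i
        using that z unfolding g'_def by simp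
      have "z i \<in> B i \<and> P i (z i) (z (mu i))" if i: "i \<in> S" for i
      proof (cases "i \<in> Fx")
        case True
        then have "mu i = i" using Fx by simp
        then show ?thesis using True u zval[OF i] unfolding A1_def by auto
      next
        case nF: False
        show ?thesis
        proof (cases "i \<in> M")
          case True
          have "z (mu i) = snd (v i)" using zval[of "mu i"] muM[OF True] mu i by simp
          then show ?thesis using True nF zval[OF i] vh[OF True] by simp
        next
          case False
          have j: "mu i \<in> M" using other i nF False by blast
          have "z (mu i) = fst (v (mu i))" using zval[of "mu i"] j Mnf[OF j] mu i by simp
          moreover have "mu (mu i) = i" using mu i by blast
          ultimately show ?thesis using nF False zval[OF i] vh[OF j] by simp
        qed
      qed
      moreover have "z \<in> extensional S" using z unfolding g'_def by simp
      ultimately show "z \<in> L" unfolding L_def by (auto simp: PiE_def Pi_def)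
    qed
  qed
  have "card L = card (PiE Fx A1 \<times> PiE M A2)" using bij by (rule bij_betw_same_card)
  also have "\<dots> = card (PiE Fx A1) * card (PiE M A2)" by (rule card_cartesian_product)
  also have "\<dots> = (\<Prod>i\<in>Fx. card (A1 i)) * (\<Prod>h\<in>M. card (A2 h))"
  proof -
    have "finite Fx" "finite M" using fin FxS MS' finite_subset by auto
    then show ?thesis by (simp add: card_PiE)
  qed
  finally show ?thesis unfolding L_def A1_def A2_def .
qed


context cyc begin

lemma lcd_local:
  fixes C :: "(nat \<Rightarrow> 'e) set"
  assumes C: "cyclic_code q t n C"
  shows "lcd q t n \<delta> C \<longleftrightarrow> (\<forall>i<s. (C \<inter> Jt t i) \<inter> ldual q t n \<delta> (Jt t i) (C \<inter> Jt t (mu' i)) = {zvec})"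
proof -
  have "(C \<inter> Jt t i) \<inter> (dual q t n \<delta> C \<inter> Jt t i) = (C \<inter> Jt t i) \<inter> ldual q t n \<delta> (Jt t i) (C \<inter> Jt t (mu' i))"
    if "i < s" for i using dual_J[OF C that] by simp
  then show ?thesis using part_a[OF C] by simp
qed

lemma count_codes:
  "card {C :: (nat \<Rightarrow> 'e) set. cyclic_code q t n C \<and> lcd q t n \<delta> C}
   = card {f \<in> PiE {..<s} (\<lambda>i. {D. ksub n (Ki i) (Jt t i) D}).
        \<forall>i\<in>{..<s}. f i \<inter> ldual q t n \<delta> (Jt t i) (f (mu' i)) = {zvec}}"
proof (rule bij_betw_same_card)
  let ?Phi = "\<lambda>C :: (nat \<Rightarrow> 'e) set. restrict (\<lambda>i. C \<inter> Jt t i) {..<s}"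
  show "bij_betw ?Phi {C. cyclic_code q t n C \<and> lcd q t n \<delta> C}
     {f \<in> PiE {..<s} (\<lambda>i. {D. ksub n (Ki i) (Jt t i) D}). \<forall>i\<in>{..<s}. f i \<inter> ldual q t n \<delta> (Jt t i) (f (mu' i)) = {zvec}}"
  proof (rule bij_betw_byWitness[where f'="build t"])
    show "\<forall>C\<in>{C. cyclic_code q t n C \<and> lcd q t n \<delta> C}. build t (?Phi C) = C"
    proof
      fix C assume "C \<in> {C. cyclic_code q t n C \<and> lcd q t n \<delta> C}"
      then have C: "cyclic_code q t n C" by simp
      have "build t (?Phi C) = build t (\<lambda>i. C \<inter> Jt t i)" unfolding build_def by auto
      then show "build t (?Phi C) = C" using code_determined[OF C] by simp
    qed
    show "\<forall>f\<in>{f \<in> PiE {..<s} (\<lambda>i. {D. ksub n (Ki i) (Jt t i) D}). \<forall>i\<in>{..<s}. f i \<inter> ldual q t n \<delta> (Jt t i) (f (mu' i)) = {zvec}}.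
        ?Phi (build t f) = f"
    proof
      fix f assume "f \<in> {f \<in> PiE {..<s} (\<lambda>i. {D. ksub n (Ki i) (Jt t i) D}). \<forall>i\<in>{..<s}. f i \<inter> ldual q t n \<delta> (Jt t i) (f (mu' i)) = {zvec}}"
      then have f: "f \<in> PiE {..<s} (\<lambda>i. {D. ksub n (Ki i) (Jt t i) D})" by simp
      have D: "\<And>i. i < s \<Longrightarrow> ksub n (Ki i) (Jt t i) (f i)" using f by auto
      show "?Phi (build t f) = f"
      proof
        fix i show "?Phi (build t f) i = f i"
          using build_cyclic(2)[OF D] f by (auto simp: PiE_def extensional_def)
      qed
    qed
    show "?Phi ` {C. cyclic_code q t n C \<and> lcd q t n \<delta> C} \<subseteq>
      {f \<in> PiE {..<s} (\<lambda>i. {D. ksub n (Ki i) (Jt t i) D}). \<forall>i\<in>{..<s}. f i \<inter> ldual q t n \<delta> (Jt t i) (f (mu' i)) = {zvec}}"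
    proof
      fix z assume "z \<in> ?Phi ` {C. cyclic_code q t n C \<and> lcd q t n \<delta> C}"
      then obtain C where C: "cyclic_code q t n C" "lcd q t n \<delta> C" and z: "z = ?Phi C" by blast
      have "?Phi C \<in> PiE {..<s} (\<lambda>i. {D. ksub n (Ki i) (Jt t i) D})" using ksub_inter[OF C(1)] by auto
      moreover have "\<forall>i\<in>{..<s}. ?Phi C i \<inter> ldual q t n \<delta> (Jt t i) (?Phi C (mu' i)) = {zvec}"
        using lcd_local[OF C(1)] C(2) mu_lt by simp
      ultimately show "z \<in> {f \<in> PiE {..<s} (\<lambda>i. {D. ksub n (Ki i) (Jt t i) D}). \<forall>i\<in>{..<s}. f i \<inter> ldual q t n \<delta> (Jt t i) (f (mu' i)) = {zvec}}"
        using z by simp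
    qed
    show "build t ` {f \<in> PiE {..<s} (\<lambda>i. {D. ksub n (Ki i) (Jt t i) D}). \<forall>i\<in>{..<s}. f i \<inter> ldual q t n \<delta> (Jt t i) (f (mu' i)) = {zvec}}
      \<subseteq> {C. cyclic_code q t n C \<and> lcd q t n \<delta> C}"
    proof
      fix z assume "z \<in> build t ` {f \<in> PiE {..<s} (\<lambda>i. {D. ksub n (Ki i) (Jt t i) D}). \<forall>i\<in>{..<s}. f i \<inter> ldual q t n \<delta> (Jt t i) (f (mu' i)) = {zvec}}"
      then obtain f where f: "f \<in> PiE {..<s} (\<lambda>i. {D. ksub n (Ki i) (Jt t i) D})"
        and fl: "\<forall>i\<in>{..<s}. f i \<inter> ldual q t n \<delta> (Jt t i) (f (mu' i)) = {zvec}" and z: "z = build t f" by blast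
      have D: "\<And>i. i < s \<Longrightarrow> ksub n (Ki i) (Jt t i) (f i)" using f by auto
      have cy: "cyclic_code q t n (build t f)" by (rule build_cyclic(1)[OF D])
      have "lcd q t n \<delta> (build t f)"
        using lcd_local[OF cy] build_cyclic(2)[OF D] fl mu_lt by simp
      then show "z \<in> {C. cyclic_code q t n C \<and> lcd q t n \<delta> C}" using cy z by simp
    qed
  qed
qed

lemma count_final:
  assumes MS: "M \<subseteq> {i. i < s \<and> mu' i \<noteq> i}"
    and Mc: "\<forall>i<s. mu' i \<noteq> i \<longrightarrow> (i \<in> M \<longleftrightarrow> mu' i \<notin> M)"
  shows "card {C :: (nat \<Rightarrow> 'e) set. cyclic_code q t n C \<and> lcd q t n \<delta> C}
         = (\<Prod>i\<in>Fset q n s ell \<union> Iset q n s ell. Nfix q t n \<delta> \<eta> (int (ell i)))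
           * (\<Prod>h\<in>M. Npair q t n \<delta> \<eta> (int (ell h)) (int (ell (mu' h))))"
proof -
  have Fx: "Fset q n s ell \<union> Iset q n s ell = {i \<in> {..<s}. mu' i = i}"
    using Iset_fix unfolding Fset_def by auto
  have "card {f \<in> PiE {..<s} (\<lambda>i. {D. ksub n (Ki i) (Jt t i) D}).
        \<forall>i\<in>{..<s}. f i \<inter> ldual q t n \<delta> (Jt t i) (f (mu' i)) = {zvec}}
    = (\<Prod>i\<in>Fset q n s ell \<union> Iset q n s ell. card {D \<in> {D. ksub n (Ki i) (Jt t i) D}. D \<inter> ldual q t n \<delta> (Jt t i) D = {zvec}})
      * (\<Prod>h\<in>M. card {(D, E). D \<in> {D. ksub n (Ki h) (Jt t h) D} \<and> E \<in> {D. ksub n (Ki (mu' h)) (Jt t (mu' h)) D}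
            \<and> D \<inter> ldual q t n \<delta> (Jt t h) E = {zvec} \<and> E \<inter> ldual q t n \<delta> (Jt t (mu' h)) D = {zvec}})"
    by (rule count_pairs[where P="\<lambda>i D E. D \<inter> ldual q t n \<delta> (Jt t i) E = {zvec}"
          and B="\<lambda>i. {D. ksub n (Ki i) (Jt t i) D}"])
       (simp, use mu_lt mu_mu in blast, rule Fx, use MS in blast, use Mc in blast)
  moreover have "card {D \<in> {D. ksub n (Ki i) (Jt t i) D}. D \<inter> ldual q t n \<delta> (Jt t i) D = {zvec}} = Nfix q t n \<delta> \<eta> (int (ell i))" for i
    unfolding Nfix_def by (rule arg_cong[where f=card]) blast
  moreover have "card {(D, E). D \<in> {D. ksub n (Ki h) (Jt t h) D} \<and> E \<in> {D. ksub n (Ki (mu' h)) (Jt t (mu' h)) D}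
            \<and> D \<inter> ldual q t n \<delta> (Jt t h) E = {zvec} \<and> E \<inter> ldual q t n \<delta> (Jt t (mu' h)) D = {zvec}}
     = Npair q t n \<delta> \<eta> (int (ell h)) (int (ell (mu' h)))" for h
    unfolding Npair_def by (rule arg_cong[where f=card]) simp
  ultimately show ?thesis using count_codes by (simp only:)
qed

end

theorem proposition3p1:
  fixes p q k n t s :: nat and \<eta> :: "'e::field" and ell :: "nat \<Rightarrow> nat"
    and \<delta> :: "'e form_kind" and M :: "nat set"
  assumes "prime p" and "k \<ge> 1" and "q = p ^ k" and "of_nat p = (0::'e)"
    and "n \<ge> 1" and "coprime n q"
    and "card (Fsub (q ^ t) :: 'e set) = q ^ t"
    and "\<eta> ^ n = 1" and "\<forall>j. 0 < j \<and> j < n \<longrightarrow> \<eta> ^ j \<noteq> 1"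
    and "ell 0 = 0" and "\<forall>i<s. ell i < n"
    and "\<forall>i<s. \<forall>j<s. cyc_coset q n (int (ell i)) = cyc_coset q n (int (ell j)) \<longrightarrow> i = j"
    and "\<forall>m<n. \<exists>i<s. m \<in> cyc_coset q n (int (ell i))"
    and "in_T p q t \<delta>"
    and "M \<subseteq> {i. i < s \<and> mu q n s ell i \<noteq> i}"
    and "\<forall>i<s. mu q n s ell i \<noteq> i \<longrightarrow> (i \<in> M \<longleftrightarrow> mu q n s ell i \<notin> M)"
  shows "(\<forall>C. cyclic_code q t n C \<longrightarrow>
            (lcd q t n \<delta> C \<longleftrightarrow>
              (\<forall>i<s. (C \<inter> Jid q t n \<eta> (int (ell i))) \<inter> (dual q t n \<delta> C \<inter> Jid q t n \<eta> (int (ell i)))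
                       = {zvec})))
       \<and> card {C :: (nat \<Rightarrow> 'e) set. cyclic_code q t n C \<and> lcd q t n \<delta> C}
         = (\<Prod>i\<in>Fset q n s ell \<union> Iset q n s ell. Nfix q t n \<delta> \<eta> (int (ell i)))
           * (\<Prod>h\<in>M. Npair q t n \<delta> \<eta> (int (ell h)) (int (ell (mu q n s ell h))))"
proof -
  interpret cyc p q k n \<eta> s ell
    by unfold_locales (use assms in auto)
  have A: "\<forall>C. cyclic_code q t n C \<longrightarrow>
            (lcd q t n \<delta> C \<longleftrightarrow>
              (\<forall>i<s. (C \<inter> Jid q t n \<eta> (int (ell i))) \<inter> (dual q t n \<delta> C \<inter> Jid q t n \<eta> (int (ell i)))
                       = {zvec}))"
    using part_a by blast
  have B: "card {C :: (nat \<Rightarrow> 'e) set. cyclic_code q t n C \<and> lcd q t n \<delta> C}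
         = (\<Prod>i\<in>Fset q n s ell \<union> Iset q n s ell. Nfix q t n \<delta> \<eta> (int (ell i)))
           * (\<Prod>h\<in>M. Npair q t n \<delta> \<eta> (int (ell h)) (int (ell (mu q n s ell h))))"
    using count_final assms(15,16) by blast
  show ?thesis using A B by blast
qed

end
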